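(* Let $G=G_{\mathbf E}$ be a multi-GGS group which is not the constant GGS group. Every element of $G$ of order $p$ either lies in $\mathrm{Stab}_G(1)$ or is conjugate in $G_{\mathrm{reg}}$ to a power of $a$.
   Context: Let $p$ be an odd prime and $X=\{0,1,\dots,p-1\}$, identified with $\mathbb F_p$. $X^*$ is the $p$-regular rooted tree of finite words over $X$; $\mathrm{Aut}(X^* )$ acts on the right; $h^g=g^{-1}hg$, $[x,y]=x^{-1}y^{-1}xy$. Sections $g|_v$ are defined by $(vw)^g=v^g\,w^{g|_v}$. $\mathrm{Stab}(1)$ is the stabiliser of all one-letter words, $\mathrm{Stab}_G(1)=G\cap\mathrm{Stab}(1)$, and $\psi_1\colon\mathrm{Stab}(1)\to\mathrm{Aut}(X^* )^p$, $g\mapsto(g|_0,\dots,g|_{p-1})$, is an isomorphism. Let $a$ be the rooted automorphism acting as $\sigma=(0\,1\,\cdots\,p-1)$ on the first letter and trivially on the remaining letters. Let $\mathbf E\le\mathbb F_p^{p-1}$ be a subspace of dimension $r\ge1$; $E$ is the $r\times(p-1)$ matrix whose rows form a fixed basis of $\mathbf E$, with columns $\mathbf e_1,\dots,\mathbf e_{p-1}$; $\mathbf s_1,\dots,\mathbf s_r$ is the standard basis of $\mathbb F_p^r$. For $\mathbf n\in\mathbb F_p^r$, $b^{\mathbf n}\in\mathrm{Stab}(1)$ is the unique automorphism with $\psi_1(b^{\mathbf n})=(b^{\mathbf n},a^{\mathbf n\cdot\mathbf e_1},\dots,a^{\mathbf n\cdot\mathbf e_{p-1}})$. $G=G_{\mathbf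 E}$ is generated by $a$ and all $b^{\mathbf n}$; it is the constant GGS group if $\mathbf E=\{(\lambda,\dots,\lambda)\mid\lambda\in\mathbb F_p\}$. The regularisation is $G_{\mathrm{reg}}=\langle G\cup\{\underline c\}\rangle$ with $\underline c=\psi_1^{-1}([b^{\mathbf s_1},a],1,\dots,1)$. *)

theory Defs
  imports "HOL-Algebra.Algebra"
begin

text \<open>Words over X = {0,...,p-1}; vertices of the p-regular rooted tree X*.\<close>
definition Wd :: "nat \<Rightarrow> nat list set" where
  "Wd p = {w. \<forall>x\<in>set w. x < p}"

text \<open>The ambient group: bijections of X* (as extensional functions), with
  BijGroup multiplication being composition.  Conjugacy does not depend on
  left/right action conventions.\<close>
abbreviation Sym :: "nat \<Rightarrow> (nat list \<Rightarrow> nat list) monoid" where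
  "Sym p \<equiv> BijGroup (Wd p)"

fun rot :: "nat \<Rightarrow> nat \<Rightarrow> nat list \<Rightarrow> nat list" where
  "rot p k [] = []"
| "rot p k (y # w) = ((y + k) mod p) # w"

definition a_aut :: "nat \<Rightarrow> nat list \<Rightarrow> nat list" where
  "a_aut p = restrict (rot p 1) (Wd p)"

text \<open>E is an r x (p-1) matrix: row i (0 \<le> i < r), column j (1 \<le> j \<le> p-1).
  For n in F_p^r (given by n i, i < r), n . e_j = sum_{i<r} n i * E i j.
  b^n acts by psi_1(b^n) = (b^n, a^{n.e_1}, ..., a^{n.e_{p-1}}).\<close>
fun bfun :: "nat \<Rightarrow> nat \<Rightarrow> (nat \<Rightarrow> nat \<Rightarrow> nat) \<Rightarrow> (nat \<Rightarrow> nat) \<Rightarrow> nat list \<Rightarrow> nat list" where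
  "bfun p r E n [] = []"
| "bfun p r E n (x # w) =
     (if x = 0 then 0 # bfun p r E n w
      else x # rot p (\<Sum>i<r. n i * E i x) w)"

definition b_aut :: "nat \<Rightarrow> nat \<Rightarrow> (nat \<Rightarrow> nat \<Rightarrow> nat) \<Rightarrow> (nat \<Rightarrow> nat) \<Rightarrow> nat list \<Rightarrow> nat list" where
  "b_aut p r E n = restrict (bfun p r E n) (Wd p)"

definition multiGGS :: "nat \<Rightarrow> nat \<Rightarrow> (nat \<Rightarrow> nat \<Rightarrow> nat) \<Rightarrow> (nat list \<Rightarrow> nat list) set" where
  "multiGGS p r E = generate (Sym p)
     (insert (a_aut p) {b_aut p r E n | n. \<forall>i<r. n i < p})"

text \<open>Standard basis vector s_1 (index 0 here).\<close>
definition s1 :: "nat \<Rightarrow> nat" where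
  "s1 = (\<lambda>i. if i = 0 then 1 else 0)"

text \<open>The commutator [b^{s_1}, a] = (b^{s_1})^{-1} a^{-1} b^{s_1} a with right action,
  i.e. as a function a o b o a^{-1} o b^{-1}, which is the BijGroup product below.\<close>
definition comm_ba :: "nat \<Rightarrow> nat \<Rightarrow> (nat \<Rightarrow> nat \<Rightarrow> nat) \<Rightarrow> nat list \<Rightarrow> nat list" where
  "comm_ba p r E =
     a_aut p \<otimes>\<^bsub>Sym p\<^esub> b_aut p r E s1 \<otimes>\<^bsub>Sym p\<^esub> inv\<^bsub>Sym p\<^esub> (a_aut p)
       \<otimes>\<^bsub>Sym p\<^esub> inv\<^bsub>Sym p\<^esub> (b_aut p r E s1)"

fun cfun :: "nat \<Rightarrow> nat \<Rightarrow> (nat \<Rightarrow> nat \<Rightarrow> nat) \<Rightarrow> nat list \<Rightarrow> nat list" where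
  "cfun p r E [] = []"
| "cfun p r E (x # w) = (if x = 0 then 0 # comm_ba p r E w else x # w)"

definition c_aut :: "nat \<Rightarrow> nat \<Rightarrow> (nat \<Rightarrow> nat \<Rightarrow> nat) \<Rightarrow> nat list \<Rightarrow> nat list" where
  "c_aut p r E = restrict (cfun p r E) (Wd p)"

definition Greg :: "nat \<Rightarrow> nat \<Rightarrow> (nat \<Rightarrow> nat \<Rightarrow> nat) \<Rightarrow> (nat list \<Rightarrow> nat list) set" where
  "Greg p r E = generate (Sym p) (insert (c_aut p r E) (multiGGS p r E))"

definition Stab1 :: "nat \<Rightarrow> (nat list \<Rightarrow> nat list) set \<Rightarrow> (nat list \<Rightarrow> nat list) set" where
  "Stab1 p H = {g \<in> H. \<forall>x<p. g [x] = [x]}"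

definition rows_lin_indep :: "nat \<Rightarrow> nat \<Rightarrow> (nat \<Rightarrow> nat \<Rightarrow> nat) \<Rightarrow> bool" where
  "rows_lin_indep p r E \<longleftrightarrow>
     (\<forall>n :: nat \<Rightarrow> nat. (\<forall>i<r. n i < p) \<longrightarrow>
        (\<forall>j\<in>{1..p-1}. (\<Sum>i<r. n i * E i j) mod p = 0) \<longrightarrow> (\<forall>i<r. n i = 0))"

definition row_space :: "nat \<Rightarrow> nat \<Rightarrow> (nat \<Rightarrow> nat \<Rightarrow> nat) \<Rightarrow> (nat \<Rightarrow> nat) set" where
  "row_space p r E = {(\<lambda>j. if j \<in> {1..p-1} then (\<Sum>i<r. n i * E i j) mod p else 0) | n.
                        \<forall>i<r. n i < p}"

definition const_space :: "nat \<Rightarrow> (nat \<Rightarrow> nat) set" where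
  "const_space p = {(\<lambda>j. if j \<in> {1..p-1} then c else 0) | c. c < p}"

end

theory Submission
  imports Defs "HOL-Number_Theory.Number_Theory"
begin

lemma Wd_Cons[simp]: "(x # u \<in> Wd p) = (x < p \<and> u \<in> Wd p)"
  by (auto simp: Wd_def)
lemma Wd_Nil[simp]: "[] \<in> Wd p" by (simp add: Wd_def)

lemma rot_Wd: "p > 0 \<Longrightarrow> u \<in> Wd p \<Longrightarrow> rot p k u \<in> Wd p"
  by (cases u) auto
lemma rot_add: "rot p k (rot p l u) = rot p (k + l) u"
  by (cases u) (simp_all add: mod_add_right_eq ac_simps)
lemma rot_mod: "k mod p = l mod p \<Longrightarrow> rot p k u = rot p l u"
  by (cases u) (auto intro: mod_add_cong)
lemma rot_0: "u \<in> Wd p \<Longrightarrow> k mod p = 0 \<Longrightarrow> rot p k u = u"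
proof (cases u)
  case (Cons y w)
  assume "u \<in> Wd p" "k mod p = 0"
  thus ?thesis using Cons by simp (metis add.right_neutral mod_add_right_eq mod_less)
qed simp

lemma S_carrier: "carrier (Sym p) = Bij (Wd p)" by (simp add: BijGroup_def)
lemma S_mult: "f \<in> Bij (Wd p) \<Longrightarrow> g \<in> Bij (Wd p) \<Longrightarrow> f \<otimes>\<^bsub>Sym p\<^esub> g = compose (Wd p) f g"
  by (simp add: BijGroup_def)
lemma S_one: "\<one>\<^bsub>Sym p\<^esub> = (\<lambda>x\<in>Wd p. x)" by (simp add: BijGroup_def)

lemma grp: "group (Sym p)" by (rule group_BijGroup)
lemma mc: "f \<in> carrier (Sym p) \<Longrightarrow> g \<in> carrier (Sym p) \<Longrightarrow> f \<otimes>\<^bsub>Sym p\<^esub> g \<in> carrier (Sym p)"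
  by (rule monoid.m_closed[OF group.is_monoid[OF grp]])
lemma oc: "\<one>\<^bsub>Sym p\<^esub> \<in> carrier (Sym p)"
  by (rule monoid.one_closed[OF group.is_monoid[OF grp]])
lemma ic: "f \<in> carrier (Sym p) \<Longrightarrow> inv\<^bsub>Sym p\<^esub> f \<in> carrier (Sym p)"
  by (rule group.inv_closed[OF grp])

lemma Bij_maps: "f \<in> Bij S \<Longrightarrow> u \<in> S \<Longrightarrow> f u \<in> S"
  using Bij_imp_funcset by blast

lemma mult_apply: "f \<in> carrier (Sym p) \<Longrightarrow> g \<in> carrier (Sym p) \<Longrightarrow> u \<in> Wd p \<Longrightarrow>
   (f \<otimes>\<^bsub>Sym p\<^esub> g) u = f (g u)"
  by (simp add: S_mult S_carrier compose_def)
lemma one_apply: "u \<in> Wd p \<Longrightarrow> \<one>\<^bsub>Sym p\<^esub> u = u" by (simp add: S_one)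

lemma fun_eqI: "f \<in> carrier (Sym p) \<Longrightarrow> g \<in> carrier (Sym p) \<Longrightarrow> (\<And>u. u \<in> Wd p \<Longrightarrow> f u = g u) \<Longrightarrow> f = g"
  unfolding S_carrier Bij_def by (rule extensionalityI[of f "Wd p" g]) auto

lemma inv_apply1: "f \<in> carrier (Sym p) \<Longrightarrow> u \<in> Wd p \<Longrightarrow> f ((inv\<^bsub>Sym p\<^esub> f) u) = u"
proof -
  assume f: "f \<in> carrier (Sym p)" and u: "u \<in> Wd p"
  interpret group "Sym p" by (rule grp)
  have "f ((inv\<^bsub>Sym p\<^esub> f) u) = (f \<otimes>\<^bsub>Sym p\<^esub> inv\<^bsub>Sym p\<^esub> f) u" by (rule mult_apply[OF f inv_closed[OF f] u, symmetric])
  also have "\<dots> = \<one>\<^bsub>Sym p\<^esub> u" by (simp only: r_inv[OF f])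
  finally show ?thesis by (simp only: one_apply[OF u])
qed
lemma inv_apply2: "f \<in> carrier (Sym p) \<Longrightarrow> u \<in> Wd p \<Longrightarrow> (inv\<^bsub>Sym p\<^esub> f) (f u) = u"
proof -
  assume f: "f \<in> carrier (Sym p)" and u: "u \<in> Wd p"
  interpret group "Sym p" by (rule grp)
  have "(inv\<^bsub>Sym p\<^esub> f) (f u) = (inv\<^bsub>Sym p\<^esub> f \<otimes>\<^bsub>Sym p\<^esub> f) u" by (rule mult_apply[OF inv_closed[OF f] f u, symmetric])
  also have "\<dots> = \<one>\<^bsub>Sym p\<^esub> u" by (simp only: l_inv[OF f])
  finally show ?thesis by (simp only: one_apply[OF u])
qed
lemma carrier_maps: "f \<in> carrier (Sym p) \<Longrightarrow> u \<in> Wd p \<Longrightarrow> f u \<in> Wd p"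
  by (simp add: S_carrier Bij_maps)

lemma carrierI:
  assumes "\<And>u. u \<in> Wd p \<Longrightarrow> f u \<in> Wd p" "\<And>u. u \<in> Wd p \<Longrightarrow> g u \<in> Wd p"
    "\<And>u. u \<in> Wd p \<Longrightarrow> f (g u) = u" "\<And>u. u \<in> Wd p \<Longrightarrow> g (f u) = u"
  shows "restrict f (Wd p) \<in> carrier (Sym p)"
proof -
  have b: "bij_betw f (Wd p) (Wd p)"
  proof (rule bij_betw_byWitness[where f'=g])
    show "\<forall>a\<in>Wd p. g (f a) = a" using assms(4) by blast
    show "\<forall>a\<in>Wd p. f (g a) = a" using assms(3) by blast
    show "f ` Wd p \<subseteq> Wd p" using assms(1) by blast
    show "g ` Wd p \<subseteq> Wd p" using assms(2) by blast
  qed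
  show ?thesis unfolding S_carrier Bij_def
    using b by (simp only: bij_betw_restrict_eq restrict_extensional Int_iff mem_Collect_eq simp_thms)
qed


datatype lt = LA nat | LB "nat \<Rightarrow> nat"

lemma Af_carrier0: "p > 0 \<Longrightarrow> restrict (rot p c) (Wd p) \<in> carrier (Sym p)"
proof (rule carrierI[where g="rot p (p - c mod p)"])
  fix u assume p: "p > 0" and u: "u \<in> Wd p"
  show "rot p c u \<in> Wd p" "rot p (p - c mod p) u \<in> Wd p" using p u by (auto intro: rot_Wd)
  have "(c + (p - c mod p)) mod p = 0"
    by (metis add.commute le_add_diff_inverse2 mod_add_left_eq mod_le_divisor mod_self p)
  thus "rot p c (rot p (p - c mod p) u) = u" using u by (simp add: rot_add rot_0)
  have "((p - c mod p) + c) mod p = 0" using \<open>(c + (p - c mod p)) mod p = 0\<close> by (simp add: add.commute)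
  thus "rot p (p - c mod p) (rot p c u) = u" using u by (simp add: rot_add rot_0)
qed

locale mg =
  fixes p r :: nat and E :: "nat \<Rightarrow> nat \<Rightarrow> nat"
  assumes pr: "Factorial_Ring.prime p" and r1: "r \<ge> 1" and lin: "rows_lin_indep p r E"
begin


lemma p_gt1: "p > 1" using pr prime_gt_1_nat by blast
lemma p_pos: "p > 0" using p_gt1 by simp

definition Af :: "nat \<Rightarrow> nat list \<Rightarrow> nat list" where "Af c = restrict (rot p c) (Wd p)"
definition bsum :: "(nat \<Rightarrow> nat) \<Rightarrow> nat \<Rightarrow> nat" where "bsum n x = (\<Sum>i<r. n i * E i x)"

lemma Af_carrier[simp]: "Af c \<in> carrier (Sym p)"
  unfolding Af_def using Af_carrier0 p_pos by blast
lemma Af_apply: "x < p \<Longrightarrow> u \<in> Wd p \<Longrightarrow> Af c (x # u) = ((x + c) mod p) # u"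
  by (simp add: Af_def)
lemma Af_Nil: "Af c [] = []" by (simp add: Af_def)
lemma Af_apply2: "u \<in> Wd p \<Longrightarrow> Af c u = rot p c u" by (simp add: Af_def)
lemma Af_mult: "Af c \<otimes>\<^bsub>Sym p\<^esub> Af d = Af (c + d)"
proof (rule fun_eqI[where p=p])
  fix u assume u: "u \<in> Wd p"
  have "(Af c \<otimes>\<^bsub>Sym p\<^esub> Af d) u = Af c (Af d u)" using mult_apply[OF Af_carrier Af_carrier u] .
  also have "\<dots> = rot p c (rot p d u)" using u rot_Wd[OF p_pos u] Af_apply2 by metis
  also have "\<dots> = Af (c+d) u" using u Af_apply2 rot_add by metis
  finally show "(Af c \<otimes>\<^bsub>Sym p\<^esub> Af d) u = Af (c+d) u" .
qed (auto intro: mc)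
lemma Af_mod: "c mod p = d mod p \<Longrightarrow> Af c = Af d"
  unfolding Af_def using rot_mod by (metis restrict_ext)
lemma Af_0: "c mod p = 0 \<Longrightarrow> Af c = \<one>\<^bsub>Sym p\<^esub>"
  unfolding Af_def S_one using rot_0 by (metis restrict_ext)

lemma bfun_Wd: "u \<in> Wd p \<Longrightarrow> bfun p r E n u \<in> Wd p"
proof (induction u)
  case (Cons x w)
  have 1: "w \<in> Wd p" "x < p" using Cons.prems by simp_all
  hence "bfun p r E n w \<in> Wd p" "rot p (\<Sum>i<r. n i * E i x) w \<in> Wd p" using Cons.IH rot_Wd[OF p_pos] by blast+
  thus ?case using 1 by simp
qed simp

lemma bfun_cong: "(\<And>x. 0 < x \<Longrightarrow> x < p \<Longrightarrow> bsum n x mod p = bsum m x mod p) \<Longrightarrow> u \<in> Wd p \<Longrightarrow>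
  bfun p r E n u = bfun p r E m u"
proof (induction u)
  case (Cons x w)
  have 1: "w \<in> Wd p" "x < p" using Cons.prems by simp_all
  show ?case
  proof (cases "x = 0")
    case True thus ?thesis using Cons.IH[OF Cons.prems(1) 1(1)] by simp
  next
    case False
    hence "bsum n x mod p = bsum m x mod p" using Cons.prems(1) 1 by simp
    hence "rot p (bsum n x) w = rot p (bsum m x) w" by (rule rot_mod)
    thus ?thesis using False by (simp add: bsum_def)
  qed
qed simp

lemma bsum_add: "bsum (\<lambda>i. n i + m i) x = bsum n x + bsum m x"
  by (simp add: bsum_def sum.distrib algebra_simps)

lemma bfun_add: "bfun p r E n (bfun p r E m u) = bfun p r E (\<lambda>i. n i + m i) u"
proof (induction u)
  case (Cons x w)
  thus ?case by (simp add: rot_add bsum_add[unfolded bsum_def])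
qed simp

definition neg :: "(nat \<Rightarrow> nat) \<Rightarrow> nat \<Rightarrow> nat" where "neg n = (\<lambda>i. p - n i mod p)"

lemma neg_mod: "(a + (p - a mod p)) mod p = 0"
  by (metis add.commute le_add_diff_inverse2 mod_add_left_eq mod_le_divisor mod_self p_pos)

lemma bsum_neg: "bsum (\<lambda>i. n i + neg n i) x mod p = 0"
proof -
  have "\<forall>i. (n i + neg n i) mod p = 0" by (simp add: neg_def neg_mod)
  hence "\<forall>i. p dvd (n i + neg n i)" by (simp add: dvd_eq_mod_eq_0)
  hence "\<forall>i. p dvd (n i + neg n i) * E i x" by (simp add: dvd_mult2)
  hence "p dvd bsum (\<lambda>i. n i + neg n i) x" unfolding bsum_def by (auto intro: dvd_sum)
  thus ?thesis by simp
qed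

lemma bfun_zero: "(\<And>x. 0 < x \<Longrightarrow> x < p \<Longrightarrow> bsum n x mod p = 0) \<Longrightarrow> u \<in> Wd p \<Longrightarrow> bfun p r E n u = u"
proof (induction u)
  case (Cons x w)
  have 1: "w \<in> Wd p" "x < p" using Cons.prems by simp_all
  show ?case
  proof (cases "x = 0")
    case True thus ?thesis using Cons.IH[OF Cons.prems(1) 1(1)] by simp
  next
    case False
    hence "bsum n x mod p = 0" using Cons.prems(1) 1 by simp
    hence "rot p (bsum n x) w = w" by (rule rot_0[OF 1(1)])
    thus ?thesis using False by (simp add: bsum_def)
  qed
qed simp

lemma B_carrier[simp]: "b_aut p r E n \<in> carrier (Sym p)"
  unfolding b_aut_def
proof (rule carrierI[where g="bfun p r E (neg n)"])
  fix u assume u: "u \<in> Wd p"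
  show "bfun p r E n u \<in> Wd p" "bfun p r E (neg n) u \<in> Wd p" using u by (auto intro: bfun_Wd)
  show "bfun p r E n (bfun p r E (neg n) u) = u" using u
    by (simp add: bfun_add, intro bfun_zero) (simp_all add: bsum_neg add.commute)
  show "bfun p r E (neg n) (bfun p r E n u) = u" using u
    by (simp add: bfun_add, intro bfun_zero) (simp_all add: bsum_neg add.commute)
qed

lemma B_apply0: "u \<in> Wd p \<Longrightarrow> b_aut p r E n (0 # u) = 0 # b_aut p r E n u"
  using p_pos by (simp add: b_aut_def)
lemma B_apply: "0 < x \<Longrightarrow> x < p \<Longrightarrow> u \<in> Wd p \<Longrightarrow> b_aut p r E n (x # u) = x # Af (bsum n x) u"
  by (simp add: b_aut_def Af_def bsum_def)
lemma B_Nil: "b_aut p r E n [] = []" by (simp add: b_aut_def)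
lemma B_mult: "b_aut p r E n \<otimes>\<^bsub>Sym p\<^esub> b_aut p r E m = b_aut p r E (\<lambda>i. n i + m i)"
proof (rule fun_eqI[where p=p])
  fix u assume u: "u \<in> Wd p"
  have "(b_aut p r E n \<otimes>\<^bsub>Sym p\<^esub> b_aut p r E m) u = b_aut p r E n (b_aut p r E m u)"
    using mult_apply[OF B_carrier B_carrier u] .
  also have "\<dots> = b_aut p r E (\<lambda>i. n i + m i) u" using u bfun_Wd[OF u] bfun_add unfolding b_aut_def by simp
  finally show "(b_aut p r E n \<otimes>\<^bsub>Sym p\<^esub> b_aut p r E m) u = b_aut p r E (\<lambda>i. n i + m i) u" .
qed (auto intro: mc)
lemma B_cong: "(\<And>x. 0 < x \<Longrightarrow> x < p \<Longrightarrow> bsum n x mod p = bsum m x mod p) \<Longrightarrow> b_aut p r E n = b_aut p r E m"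
  unfolding b_aut_def using bfun_cong by (metis restrict_ext)


fun evl :: "lt \<Rightarrow> nat list \<Rightarrow> nat list" where
  "evl (LA c) = Af c" | "evl (LB n) = b_aut p r E n"
fun ev :: "lt list \<Rightarrow> nat list \<Rightarrow> nat list" where
  "ev [] = \<one>\<^bsub>Sym p\<^esub>" | "ev (l # w) = evl l \<otimes>\<^bsub>Sym p\<^esub> ev w"
fun Aexp :: "lt list \<Rightarrow> nat" where
  "Aexp [] = 0" | "Aexp (LA c # w) = c + Aexp w" | "Aexp (LB n # w) = Aexp w"
fun sectl :: "lt \<Rightarrow> nat \<Rightarrow> lt list" where
  "sectl (LA c) y = []" | "sectl (LB n) y = (if y = 0 then [LB n] else [LA (bsum n y)])"
fun sect :: "lt list \<Rightarrow> nat \<Rightarrow> lt list" where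
  "sect [] x = []" | "sect (l # w) x = sectl l ((x + Aexp w) mod p) @ sect w x"

lemma evl_carrier[simp]: "evl l \<in> carrier (Sym p)"
  by (cases l) simp_all
lemma ev_carrier[simp]: "ev w \<in> carrier (Sym p)"
  by (induction w) (simp_all add: mc oc)
lemma ev_append: "ev (v @ w) = ev v \<otimes>\<^bsub>Sym p\<^esub> ev w"
proof (induction v)
  case Nil thus ?case using monoid.l_one[OF group.is_monoid[OF grp] ev_carrier] by simp
next
  case (Cons l v)
  thus ?case using monoid.m_assoc[OF group.is_monoid[OF grp] evl_carrier ev_carrier ev_carrier] by simp
qed
lemma ev_app_apply: "u \<in> Wd p \<Longrightarrow> ev (v @ w) u = ev v (ev w u)"
  by (simp only: ev_append mult_apply[OF ev_carrier ev_carrier])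
lemma ev_single: "u \<in> Wd p \<Longrightarrow> ev [l] u = evl l u"
  by (simp only: ev.simps mult_apply[OF evl_carrier oc] one_apply)
lemma ev_cons_apply: "u \<in> Wd p \<Longrightarrow> ev (l # w) u = evl l (ev w u)"
  by (simp only: ev.simps mult_apply[OF evl_carrier ev_carrier])
lemma ev_maps: "u \<in> Wd p \<Longrightarrow> ev w u \<in> Wd p"
  by (rule carrier_maps[OF ev_carrier])

lemma evl_Nil: "evl l [] = []" by (cases l) (simp_all add: Af_Nil B_Nil)
lemma ev_Nil: "ev w [] = []"
proof (induction w)
  case Nil thus ?case by (simp add: one_apply)
next
  case (Cons l w) thus ?case using ev_cons_apply[OF Wd_Nil] evl_Nil by simp
qed

lemma ev_apply: "x < p \<Longrightarrow> u \<in> Wd p \<Longrightarrow> ev w (x # u) = ((x + Aexp w) mod p) # ev (sect w x) u"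
proof (induction w)
  case Nil thus ?case by (simp add: one_apply)
next
  case (Cons l w)
  define y where "y = (x + Aexp w) mod p"
  define v where "v = ev (sect w x) u"
  have xu: "x # u \<in> Wd p" using Cons.prems by simp
  have v: "v \<in> Wd p" unfolding v_def by (rule ev_maps[OF Cons.prems(2)])
  have y: "y < p" unfolding y_def using p_pos by simp
  have 1: "ev (l # w) (x # u) = evl l (y # v)"
    using ev_cons_apply[OF xu] Cons.IH[OF Cons.prems] unfolding y_def v_def by simp
  show ?case
  proof (cases l)
    case (LA c)
    have "evl l (y # v) = ((y + c) mod p) # v" using LA Af_apply[OF y v] by simp
    moreover have "(y + c) mod p = (x + Aexp (l # w)) mod p" unfolding y_def using LA
      by (simp add: mod_add_right_eq ac_simps)
    moreover have "ev (sect (l # w) x) u = v" using LA v_def by simp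
    ultimately show ?thesis using 1 by simp
  next
    case (LB n)
    have A: "Aexp (l # w) = Aexp w" using LB by simp
    show ?thesis
    proof (cases "y = 0")
      case True
      have "evl l (y # v) = 0 # b_aut p r E n v" using LB True B_apply0[OF v] by simp
      moreover have "ev (sect (l # w) x) u = b_aut p r E n v"
      proof -
        have s: "sect (l # w) x = [LB n] @ sect w x" using LB True y_def by simp
        have "ev (sect (l # w) x) u = ev [LB n] v" unfolding s ev_app_apply[OF Cons.prems(2)] v_def ..
        thus ?thesis using ev_single[OF v, of "LB n"] by (simp only: evl.simps)
      qed
      ultimately show ?thesis using 1 A True y_def by simp
    next
      case False
      have "evl l (y # v) = y # Af (bsum n y) v" using LB False B_apply[OF _ y v] by simp
      moreover have "ev (sect (l # w) x) u = Af (bsum n y) v"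
      proof -
        have s: "sect (l # w) x = [LA (bsum n y)] @ sect w x" using LB False y_def by simp
        have "ev (sect (l # w) x) u = ev [LA (bsum n y)] v" unfolding s ev_app_apply[OF Cons.prems(2)] v_def ..
        thus ?thesis using ev_single[OF v, of "LA (bsum n y)"] by (simp only: evl.simps)
      qed
      ultimately show ?thesis using 1 A y_def by simp
    qed
  qed
qed


fun Bwt :: "lt list \<Rightarrow> nat \<Rightarrow> nat" where
  "Bwt [] i = 0" | "Bwt (LA c # w) i = Bwt w i" | "Bwt (LB n # w) i = n i + Bwt w i"
fun nb :: "lt list \<Rightarrow> nat" where
  "nb [] = 0" | "nb (LA c # w) = nb w" | "nb (LB n # w) = Suc (nb w)"

lemma Aexp_append[simp]: "Aexp (v @ w) = Aexp v + Aexp w"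
  by (induction v rule: Aexp.induct) simp_all
lemma Bwt_append[simp]: "Bwt (v @ w) i = Bwt v i + Bwt w i"
  by (induction v rule: Aexp.induct) simp_all
lemma nb_append[simp]: "nb (v @ w) = nb v + nb w"
  by (induction v rule: Aexp.induct) simp_all
lemma nb0_Bwt: "nb w = 0 \<Longrightarrow> Bwt w i = 0"
  by (induction w rule: Aexp.induct) simp_all

lemma perm_bij: "bij_betw (\<lambda>y. (y + s) mod p) {..<p} {..<p}"
proof -
  have inj: "inj_on (\<lambda>y. (y + s) mod p) {..<p}"
  proof (rule inj_onI)
    fix y y' assume y: "y \<in> {..<p}" and y': "y' \<in> {..<p}" and e: "(y + s) mod p = (y' + s) mod p"
    hence "[y + s = y' + s] (mod p)" by (simp add: cong_def)
    hence "[y = y'] (mod p)" by (simp add: cong_add_rcancel_nat)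
    thus "y = y'" using y y' cong_less_modulus_unique_nat by simp
  qed
  moreover have "(\<lambda>y. (y + s) mod p) ` {..<p} \<subseteq> {..<p}" using p_pos by auto
  ultimately have "(\<lambda>y. (y + s) mod p) ` {..<p} = {..<p}" using endo_inj_surj by blast
  thus ?thesis using inj by (simp add: bij_betw_def)
qed

lemma sum_perm: "(\<Sum>x<p. f ((x + s) mod p)) = (\<Sum>y<p. (f y :: nat))"
  using sum.reindex_bij_betw[OF perm_bij, of f s] by simp

lemma sum_delta0: "(\<Sum>y<p. (if y = 0 then (a::nat) else 0)) = a"
  using p_pos by (simp add: sum.delta)

lemma sum_sect_Bwt: "(\<Sum>x<p. Bwt (sect w x) i) = Bwt w i"
proof (induction w)
  case Nil thus ?case by simp
next
  case (Cons l w)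
  have "(\<Sum>x<p. Bwt (sect (l # w) x) i) = (\<Sum>x<p. Bwt (sectl l ((x + Aexp w) mod p)) i) + (\<Sum>x<p. Bwt (sect w x) i)"
    by (simp add: sum.distrib)
  also have "(\<Sum>x<p. Bwt (sectl l ((x + Aexp w) mod p)) i) = (\<Sum>y<p. Bwt (sectl l y) i)"
    by (rule sum_perm)
  also have "(\<Sum>y<p. Bwt (sectl l y) i) = (case l of LA c \<Rightarrow> 0 | LB n \<Rightarrow> n i)"
  proof (cases l)
    case (LB n)
    have "(\<Sum>y<p. Bwt (sectl l y) i) = (\<Sum>y<p. (if y = 0 then n i else 0))"
      using LB by (intro sum.cong) auto
    thus ?thesis using LB sum_delta0 by simp
  qed simp
  finally show ?case using Cons.IH by (cases l) simp_all
qed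

lemma sum_sect_nb: "(\<Sum>x<p. nb (sect w x)) = nb w"
proof (induction w)
  case Nil thus ?case by simp
next
  case (Cons l w)
  have "(\<Sum>x<p. nb (sect (l # w) x)) = (\<Sum>x<p. nb (sectl l ((x + Aexp w) mod p))) + (\<Sum>x<p. nb (sect w x))"
    by (simp add: sum.distrib)
  also have "(\<Sum>x<p. nb (sectl l ((x + Aexp w) mod p))) = (\<Sum>y<p. nb (sectl l y))"
    by (rule sum_perm)
  also have "(\<Sum>y<p. nb (sectl l y)) = (case l of LA c \<Rightarrow> 0 | LB n \<Rightarrow> 1)"
  proof (cases l)
    case (LB n)
    have "(\<Sum>y<p. nb (sectl l y)) = (\<Sum>y<p. (if y = 0 then 1 else 0))"
      using LB by (intro sum.cong) auto
    thus ?thesis using LB sum_delta0 by simp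
  qed simp
  finally show ?case using Cons.IH by (cases l) simp_all
qed


definition epsb :: "(nat \<Rightarrow> nat) \<Rightarrow> nat \<Rightarrow> nat" where "epsb n d = (if d = 0 then 0 else bsum n d)"
definition dif :: "nat \<Rightarrow> nat \<Rightarrow> nat" where "dif x y = (x + p - y) mod p"

lemma epsb_add: "epsb (\<lambda>i. a i + b i) d = epsb a d + epsb b d"
  by (simp add: epsb_def bsum_add)
lemma epsb_zero: "(\<And>i. a i = 0) \<Longrightarrow> epsb a d = 0"
  by (simp add: epsb_def bsum_def)
lemma Bwt_append_fun: "Bwt (v @ w) = (\<lambda>i. Bwt v i + Bwt w i)"
  by (rule ext) simp

lemma perm_inj: "y < p \<Longrightarrow> y' < p \<Longrightarrow> (y + s) mod p = (y' + s) mod p \<Longrightarrow> y = y'"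
  using perm_bij[of s] unfolding bij_betw_def inj_on_def by blast

lemma zero_pre: "((p - s mod p) mod p + s) mod p = 0"
proof -
  have "((p - s mod p) mod p + s) mod p = ((p - s mod p) + s) mod p" by (rule mod_add_left_eq)
  also have "\<dots> = (s + (p - s mod p)) mod p" by (simp only: add.commute)
  also have "\<dots> = 0" by (rule neg_mod)
  finally show ?thesis .
qed

lemma dif_pre: "x < p \<Longrightarrow> dif x ((p - s mod p) mod p) = (x + s) mod p"
proof -
  assume x: "x < p"
  define y0 where "y0 = (p - s mod p) mod p"
  have y0: "y0 < p" unfolding y0_def using p_pos by simp
  have h0: "[y0 + s = 0] (mod p)" unfolding y0_def using zero_pre by (simp add: cong_def)
  have e: "(x + p - y0) + (y0 + s) = (x + s) + p" using y0 by simp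
  have "[(x + p - y0) + (y0 + s) = (x + p - y0) + 0] (mod p)" by (rule cong_add[OF cong_refl h0])
  hence 1: "[(x + s) + p = x + p - y0] (mod p)" using e by simp
  have 2: "[(x + s) + p = x + s] (mod p)" by (simp add: cong_def)
  have "[x + p - y0 = x + s] (mod p)" using 1 2 by (meson cong_sym cong_trans)
  thus ?thesis unfolding dif_def y0_def[symmetric] by (simp add: cong_def)
qed

lemma conv_letter: "x < p \<Longrightarrow> Aexp (sectl l ((x + s) mod p)) =
   (\<Sum>y<p. epsb (Bwt (sectl l ((y + s) mod p))) (dif x y))"
proof (cases l)
  case (LA c) thus ?thesis by (simp add: epsb_zero)
next
  case (LB n)
  assume x: "x < p"
  define y0 where "y0 = (p - s mod p) mod p"
  have y0: "y0 < p" unfolding y0_def using p_pos by simp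
  have z: "(y0 + s) mod p = 0" unfolding y0_def by (rule zero_pre)
  have iff: "y < p \<Longrightarrow> ((y + s) mod p = 0) = (y = y0)" for y
    using z perm_inj[of y y0 s] y0 by auto
  have "(\<Sum>y<p. epsb (Bwt (sectl l ((y + s) mod p))) (dif x y)) = (\<Sum>y<p. if y = y0 then epsb n (dif x y) else 0)"
  proof (rule sum.cong)
    fix y assume "y \<in> {..<p}"
    hence y: "y < p" by simp
    show "epsb (Bwt (sectl l ((y + s) mod p))) (dif x y) = (if y = y0 then epsb n (dif x y) else 0)"
    proof (cases "y = y0")
      case True
      have "Bwt (sectl l ((y + s) mod p)) = n" using LB True z by (auto intro: ext)
      thus ?thesis using True by simp
    next
      case False
      hence "(y + s) mod p \<noteq> 0" using iff[OF y] by simp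
      hence "\<And>i. Bwt (sectl l ((y + s) mod p)) i = 0" using LB by simp
      thus ?thesis using False epsb_zero by simp
    qed
  qed simp
  also have "\<dots> = epsb n (dif x y0)" using y0 by (simp add: sum.delta)
  also have "dif x y0 = (x + s) mod p" unfolding y0_def by (rule dif_pre[OF x])
  finally show ?thesis using LB by (simp add: epsb_def)
qed

lemma conv: "x < p \<Longrightarrow> Aexp (sect w x) mod p = (\<Sum>y<p. epsb (Bwt (sect w y)) (dif x y)) mod p"
proof (induction w)
  case Nil thus ?case by (simp add: epsb_zero)
next
  case (Cons l w)
  have "(\<Sum>y<p. epsb (Bwt (sect (l # w) y)) (dif x y)) =
        (\<Sum>y<p. epsb (Bwt (sectl l ((y + Aexp w) mod p))) (dif x y)) + (\<Sum>y<p. epsb (Bwt (sect w y)) (dif x y))"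
    by (simp add: Bwt_append_fun epsb_add sum.distrib)
  also have "(\<Sum>y<p. epsb (Bwt (sectl l ((y + Aexp w) mod p))) (dif x y)) = Aexp (sectl l ((x + Aexp w) mod p))"
    using conv_letter[OF Cons.prems] by simp
  finally have 1: "(\<Sum>y<p. epsb (Bwt (sect (l # w) y)) (dif x y)) =
     Aexp (sectl l ((x + Aexp w) mod p)) + (\<Sum>y<p. epsb (Bwt (sect w y)) (dif x y))" .
  have "Aexp (sect (l # w) x) = Aexp (sectl l ((x + Aexp w) mod p)) + Aexp (sect w x)" by simp
  thus ?case unfolding 1 using Cons.IH[OF Cons.prems] by (metis mod_add_cong)
qed


definition isid :: "lt list \<Rightarrow> bool" where "isid w \<longleftrightarrow> (\<forall>u\<in>Wd p. ev w u = u)"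

lemma isid_Aexp: "isid w \<Longrightarrow> Aexp w mod p = 0"
proof -
  assume "isid w"
  hence "ev w [0] = [0]" unfolding isid_def using p_pos by simp
  moreover have "ev w [0] = ((0 + Aexp w) mod p) # ev (sect w 0) []" using ev_apply[of 0 "[]" w] p_pos by simp
  ultimately show ?thesis by simp
qed

lemma isid_sect: "isid w \<Longrightarrow> x < p \<Longrightarrow> isid (sect w x)"
  unfolding isid_def
proof
  fix u assume h: "\<forall>u\<in>Wd p. ev w u = u" and x: "x < p" and u: "u \<in> Wd p"
  have "ev w (x # u) = x # u" using h x u by simp
  thus "ev (sect w x) u = u" using ev_apply[OF x u] by simp
qed

lemma sum_mod0: "finite A \<Longrightarrow> (\<And>x. x \<in> A \<Longrightarrow> (f x :: nat) mod p = 0) \<Longrightarrow> sum f A mod p = 0"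
proof -
  assume "finite A" "\<And>x. x \<in> A \<Longrightarrow> f x mod p = 0"
  hence "\<And>x. x \<in> A \<Longrightarrow> p dvd f x" by (simp add: dvd_eq_mod_eq_0)
  hence "p dvd sum f A" by (rule dvd_sum)
  thus ?thesis by simp
qed

lemma dif_shift: "x0 < p \<Longrightarrow> d < p \<Longrightarrow> dif ((x0 + d) mod p) x0 = d"
proof -
  assume x0: "x0 < p" and d: "d < p"
  define a where "a = (x0 + d) mod p"
  have "[a + p = x0 + d] (mod p)" unfolding a_def by (simp add: cong_def)
  moreover have "a + p = (a + p - x0) + x0" using x0 by simp
  ultimately have "[(a + p - x0) + x0 = d + x0] (mod p)" by (simp add: add.commute)
  hence "[a + p - x0 = d] (mod p)" by (simp add: cong_add_rcancel_nat)
  hence "(a + p - x0) mod p = d" using d by (simp add: cong_def)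
  thus ?thesis unfolding dif_def a_def .
qed

lemma isid_Bwt: "isid w \<Longrightarrow> i < r \<Longrightarrow> Bwt w i mod p = 0"
proof (induction "nb w" arbitrary: w i rule: less_induct)
  case less
  show ?case
  proof (cases "\<forall>x<p. nb (sect w x) < nb w")
    case True
    have "\<And>x. x \<in> {..<p} \<Longrightarrow> Bwt (sect w x) i mod p = 0"
      using less.hyps True isid_sect[OF less.prems(1)] less.prems(2) by simp
    hence "(\<Sum>x<p. Bwt (sect w x) i) mod p = 0" by (intro sum_mod0) auto
    thus ?thesis using sum_sect_Bwt by simp
  next
    case False
    then obtain x0 where x0: "x0 < p" and ge: "nb w \<le> nb (sect w x0)" by (auto simp: not_less)
    have split: "(\<Sum>x<p. f x) = f x0 + (\<Sum>x\<in>{..<p} - {x0}. f x)" for f :: "nat \<Rightarrow> nat"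
      using x0 by (simp add: sum.remove)
    have "(\<Sum>x\<in>{..<p} - {x0}. nb (sect w x)) = 0"
      using split[of "\<lambda>x. nb (sect w x)"] sum_sect_nb[of w] ge by simp
    hence others: "\<And>x. x < p \<Longrightarrow> x \<noteq> x0 \<Longrightarrow> nb (sect w x) = 0" by simp
    hence othB: "\<And>x j. x < p \<Longrightarrow> x \<noteq> x0 \<Longrightarrow> Bwt (sect w x) j = 0" using nb0_Bwt by blast
    have eqB: "Bwt (sect w x0) j = Bwt w j" for j
    proof -
      have "(\<Sum>x\<in>{..<p} - {x0}. Bwt (sect w x) j) = 0" using othB by simp
      thus ?thesis using split[of "\<lambda>x. Bwt (sect w x) j"] sum_sect_Bwt[of w j] by simp
    qed
    have key: "bsum (Bwt w) d mod p = 0" if d: "0 < d" "d < p" for d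
    proof -
      define x where "x = (x0 + d) mod p"
      have xp: "x < p" unfolding x_def using p_pos by simp
      have xne: "x \<noteq> x0"
      proof
        assume "x = x0"
        hence "(x0 + d) mod p = (x0 + 0) mod p" using x0 unfolding x_def by simp
        hence "d = 0" using perm_inj[of d 0 x0] d p_pos by (simp add: add.commute)
        thus False using d by simp
      qed
      have "(\<Sum>y<p. epsb (Bwt (sect w y)) (dif x y)) = epsb (Bwt (sect w x0)) (dif x x0) + (\<Sum>y\<in>{..<p} - {x0}. epsb (Bwt (sect w y)) (dif x y))"
        by (rule split)
      also have "(\<Sum>y\<in>{..<p} - {x0}. epsb (Bwt (sect w y)) (dif x y)) = 0"
        using othB epsb_zero by simp
      also have "dif x x0 = d" unfolding x_def by (rule dif_shift[OF x0 d(2)])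
      also have "Bwt (sect w x0) = Bwt w" using eqB by (intro ext) simp
      finally have 1: "(\<Sum>y<p. epsb (Bwt (sect w y)) (dif x y)) = bsum (Bwt w) d" using d by (simp add: epsb_def)
      have "Aexp (sect w x) mod p = 0" using isid_Aexp[OF isid_sect[OF less.prems(1) xp]] .
      thus ?thesis using conv[OF xp, of w] 1 by simp
    qed
    define n where "n = (\<lambda>i. Bwt w i mod p)"
    have nlt: "\<forall>i<r. n i < p" unfolding n_def using p_pos by simp
    have "\<forall>j\<in>{1..p-1}. (\<Sum>i<r. n i * E i j) mod p = 0"
    proof
      fix j assume "j \<in> {1..p-1}"
      hence j: "0 < j" "j < p" by auto
      have "[(\<Sum>i<r. n i * E i j) = (\<Sum>i<r. Bwt w i * E i j)] (mod p)"
        by (rule cong_sum) (simp add: n_def cong_def mod_mult_left_eq)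
      hence "(\<Sum>i<r. n i * E i j) mod p = bsum (Bwt w) j mod p" by (simp add: cong_def bsum_def)
      thus "(\<Sum>i<r. n i * E i j) mod p = 0" using key[OF j] by simp
    qed
    hence "\<forall>i<r. n i = 0" using lin nlt unfolding rows_lin_indep_def by blast
    thus ?thesis using less.prems(2) unfolding n_def by simp
  qed
qed


interpretation S: group "Sym p" by (rule grp)

definition mk :: "(nat \<Rightarrow> nat list \<Rightarrow> nat list) \<Rightarrow> nat list \<Rightarrow> nat list" where
  "mk s = restrict (\<lambda>v. case v of [] \<Rightarrow> [] | y # u \<Rightarrow> y # s y u) (Wd p)"

lemma mk_apply: "x < p \<Longrightarrow> u \<in> Wd p \<Longrightarrow> mk s (x # u) = x # s x u"
  by (simp add: mk_def)
lemma mk_Nil: "mk s [] = []" by (simp add: mk_def)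

lemma mk_carrier: "(\<And>y. y < p \<Longrightarrow> s y \<in> carrier (Sym p)) \<Longrightarrow> mk s \<in> carrier (Sym p)"
  unfolding mk_def
proof (rule carrierI[where g="\<lambda>v. case v of [] \<Rightarrow> [] | y # u \<Rightarrow> y # (inv\<^bsub>Sym p\<^esub> (s y)) u"])
  fix v assume h: "\<And>y. y < p \<Longrightarrow> s y \<in> carrier (Sym p)" and v: "v \<in> Wd p"
  show "(case v of [] \<Rightarrow> [] | y # u \<Rightarrow> y # s y u) \<in> Wd p"
    using v h by (cases v) (auto intro: carrier_maps)
  show "(case v of [] \<Rightarrow> [] | y # u \<Rightarrow> y # (inv\<^bsub>Sym p\<^esub> (s y)) u) \<in> Wd p"
    using v h by (cases v) (auto intro: carrier_maps ic)
  show "(case (case v of [] \<Rightarrow> [] | y # u \<Rightarrow> y # (inv\<^bsub>Sym p\<^esub> (s y)) u) of [] \<Rightarrow> [] | y # u \<Rightarrow> y # s y u) = v"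
    using v h by (cases v) (auto simp: inv_apply1)
  show "(case (case v of [] \<Rightarrow> [] | y # u \<Rightarrow> y # s y u) of [] \<Rightarrow> [] | y # u \<Rightarrow> y # (inv\<^bsub>Sym p\<^esub> (s y)) u) = v"
    using v h by (cases v) (auto simp: inv_apply2)
qed

lemma mk_eqI: "F \<in> carrier (Sym p) \<Longrightarrow> (\<And>y. y < p \<Longrightarrow> s y \<in> carrier (Sym p)) \<Longrightarrow> F [] = [] \<Longrightarrow>
   (\<And>x u. x < p \<Longrightarrow> u \<in> Wd p \<Longrightarrow> F (x # u) = x # s x u) \<Longrightarrow> F = mk s"
proof (rule fun_eqI[where p=p])
  fix v assume F: "F [] = []" "\<And>x u. x < p \<Longrightarrow> u \<in> Wd p \<Longrightarrow> F (x # u) = x # s x u" and v: "v \<in> Wd p"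
  show "F v = mk s v" using v F by (cases v) (simp_all add: mk_apply mk_Nil)
qed (auto intro: mk_carrier)

lemma mk_mult: "(\<And>y. y < p \<Longrightarrow> s y \<in> carrier (Sym p)) \<Longrightarrow> (\<And>y. y < p \<Longrightarrow> t y \<in> carrier (Sym p)) \<Longrightarrow>
   mk s \<otimes>\<^bsub>Sym p\<^esub> mk t = mk (\<lambda>y. s y \<otimes>\<^bsub>Sym p\<^esub> t y)"
proof (rule mk_eqI)
  assume s: "\<And>y. y < p \<Longrightarrow> s y \<in> carrier (Sym p)" and t: "\<And>y. y < p \<Longrightarrow> t y \<in> carrier (Sym p)"
  show "mk s \<otimes>\<^bsub>Sym p\<^esub> mk t \<in> carrier (Sym p)" using s t by (intro mc mk_carrier)
  show "\<And>y. y < p \<Longrightarrow> s y \<otimes>\<^bsub>Sym p\<^esub> t y \<in> carrier (Sym p)" using s t by (intro mc)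
  show "(mk s \<otimes>\<^bsub>Sym p\<^esub> mk t) [] = []"
    using mult_apply[OF mk_carrier[OF s] mk_carrier[OF t] Wd_Nil] by (simp add: mk_Nil)
  fix x u assume x: "x < p" and u: "u \<in> Wd p"
  have "(mk s \<otimes>\<^bsub>Sym p\<^esub> mk t) (x # u) = mk s (mk t (x # u))"
    using mult_apply[OF mk_carrier[OF s] mk_carrier[OF t]] x u by simp
  also have "\<dots> = x # s x (t x u)" using x u t carrier_maps by (simp add: mk_apply)
  also have "s x (t x u) = (s x \<otimes>\<^bsub>Sym p\<^esub> t x) u" using mult_apply[OF s[OF x] t[OF x] u] by simp
  finally show "(mk s \<otimes>\<^bsub>Sym p\<^esub> mk t) (x # u) = x # (s x \<otimes>\<^bsub>Sym p\<^esub> t x) u" .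
qed

lemma mk_cong: "(\<And>y. y < p \<Longrightarrow> s y = t y) \<Longrightarrow> mk s = mk t"
  unfolding mk_def by (intro restrict_ext) (auto split: list.split)

lemma mk_one: "mk (\<lambda>y. \<one>\<^bsub>Sym p\<^esub>) = \<one>\<^bsub>Sym p\<^esub>"
  by (rule sym, rule mk_eqI) (simp_all add: oc one_apply)

lemma mk_inv: "(\<And>y. y < p \<Longrightarrow> s y \<in> carrier (Sym p)) \<Longrightarrow>
   inv\<^bsub>Sym p\<^esub> (mk s) = mk (\<lambda>y. inv\<^bsub>Sym p\<^esub> (s y))"
proof -
  assume s: "\<And>y. y < p \<Longrightarrow> s y \<in> carrier (Sym p)"
  have "mk (\<lambda>y. inv\<^bsub>Sym p\<^esub> (s y)) \<otimes>\<^bsub>Sym p\<^esub> mk s = mk (\<lambda>y. inv\<^bsub>Sym p\<^esub> (s y) \<otimes>\<^bsub>Sym p\<^esub> s y)"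
    using s by (intro mk_mult ic)
  also have "\<dots> = mk (\<lambda>y. \<one>\<^bsub>Sym p\<^esub>)" using s by (intro mk_cong) simp
  finally have "mk (\<lambda>y. inv\<^bsub>Sym p\<^esub> (s y)) \<otimes>\<^bsub>Sym p\<^esub> mk s = \<one>\<^bsub>Sym p\<^esub>" using mk_one by simp
  thus ?thesis using s by (intro S.inv_equality mk_carrier ic)
qed

definition lift :: "nat \<Rightarrow> (nat list \<Rightarrow> nat list) \<Rightarrow> nat list \<Rightarrow> nat list" where
  "lift x k = mk (\<lambda>y. if y = x then k else \<one>\<^bsub>Sym p\<^esub>)"

lemma lift_carrier: "k \<in> carrier (Sym p) \<Longrightarrow> lift x k \<in> carrier (Sym p)"
  unfolding lift_def by (intro mk_carrier) (simp add: oc)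

lemma stab_mk: "Aexp w mod p = 0 \<Longrightarrow> ev w = mk (\<lambda>y. ev (sect w y))"
proof (rule mk_eqI)
  assume a: "Aexp w mod p = 0"
  show "ev w [] = []" by (rule ev_Nil)
  fix x u assume x: "x < p" and u: "u \<in> Wd p"
  have "(x + Aexp w) mod p = x" using a x by (simp add: mod_add_right_eq[symmetric])
  thus "ev w (x # u) = x # ev (sect w x) u" using ev_apply[OF x u] by simp
qed simp_all


abbreviation "Gg \<equiv> multiGGS p r E"
abbreviation "Gr \<equiv> Greg p r E"

lemma a_Af: "a_aut p = Af 1" by (simp add: a_aut_def Af_def)

lemma bsum_modp: "bsum (\<lambda>i. n i mod p) x mod p = bsum n x mod p"
proof -
  have "[(\<Sum>i<r. (n i mod p) * E i x) = (\<Sum>i<r. n i * E i x)] (mod p)"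
    by (rule cong_sum) (simp add: cong_def mod_mult_left_eq)
  thus ?thesis by (simp add: cong_def bsum_def)
qed

lemma gens_carrier: "insert (a_aut p) {b_aut p r E n | n. \<forall>i<r. n i < p} \<subseteq> carrier (Sym p)"
  using a_Af by auto

lemma Gg_sub: "subgroup Gg (Sym p)"
  unfolding multiGGS_def by (rule S.generate_is_subgroup[OF gens_carrier])

lemma comm_ba_carrier: "comm_ba p r E \<in> carrier (Sym p)"
  unfolding comm_ba_def using a_Af by (intro mc ic) simp_all

lemma c_lift: "c_aut p r E = lift 0 (comm_ba p r E)"
  unfolding c_aut_def lift_def mk_def
proof (rule restrict_ext)
  fix v assume v: "v \<in> Wd p"
  show "cfun p r E v = (case v of [] \<Rightarrow> [] | y # u \<Rightarrow> y # (if y = 0 then comm_ba p r E else \<one>\<^bsub>Sym p\<^esub>) u)"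
    using v by (cases v) (auto simp: one_apply)
qed

lemma c_carrier: "c_aut p r E \<in> carrier (Sym p)"
  unfolding c_lift by (rule lift_carrier[OF comm_ba_carrier])

lemma Gg_carrier: "Gg \<subseteq> carrier (Sym p)" using subgroup.subset[OF Gg_sub] .

lemma Gr_sub: "subgroup Gr (Sym p)"
  unfolding Greg_def using c_carrier Gg_carrier by (intro S.generate_is_subgroup) auto

lemma Gg_Gr: "x \<in> Gg \<Longrightarrow> x \<in> Gr"
  unfolding Greg_def by (rule generate.incl) simp
lemma c_Gr: "c_aut p r E \<in> Gr"
  unfolding Greg_def by (rule generate.incl) simp

lemma Af_pow: "a_aut p [^]\<^bsub>Sym p\<^esub> c = Af c"
proof (induction c)
  case 0 thus ?case using Af_0 by simp
next
  case (Suc c) thus ?case using Af_mult a_Af by simp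
qed

lemma Af_Gg: "Af c \<in> Gg"
proof (induction c)
  case 0 thus ?case using Af_0 subgroup.one_closed[OF Gg_sub] by simp
next
  case (Suc c)
  have "Af 1 \<in> Gg" unfolding multiGGS_def a_Af[symmetric] by (rule generate.incl) simp
  hence "Af c \<otimes>\<^bsub>Sym p\<^esub> Af 1 \<in> Gg" using subgroup.m_closed[OF Gg_sub Suc.IH] by blast
  thus ?case using Af_mult by simp
qed

lemma B_Gg: "b_aut p r E n \<in> Gg"
proof -
  have "b_aut p r E n = b_aut p r E (\<lambda>i. n i mod p)" using bsum_modp by (intro B_cong) simp
  moreover have "b_aut p r E (\<lambda>i. n i mod p) \<in> Gg" unfolding multiGGS_def
    by (rule generate.incl) (use p_pos in auto)
  ultimately show ?thesis by simp
qed

lemma evl_Gg: "evl l \<in> Gg" by (cases l) (simp_all add: Af_Gg B_Gg)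
lemma ev_Gg: "ev w \<in> Gg"
proof (induction w)
  case Nil thus ?case using subgroup.one_closed[OF Gg_sub] by simp
next
  case (Cons l w) thus ?case using subgroup.m_closed[OF Gg_sub evl_Gg] by simp
qed

fun invl :: "lt \<Rightarrow> lt" where "invl (LA c) = LA (p - c mod p)" | "invl (LB n) = LB (neg n)"
definition invw :: "lt list \<Rightarrow> lt list" where "invw w = rev (map invl w)"

lemma B_zero: "(\<And>x. 0 < x \<Longrightarrow> x < p \<Longrightarrow> bsum n x mod p = 0) \<Longrightarrow> b_aut p r E n = \<one>\<^bsub>Sym p\<^esub>"
  unfolding b_aut_def S_one by (intro restrict_ext bfun_zero) auto

lemma evl_invl: "evl (invl l) = inv\<^bsub>Sym p\<^esub> (evl l)"
proof (rule sym, rule S.inv_equality)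
  show "evl (invl l) \<otimes>\<^bsub>Sym p\<^esub> evl l = \<one>\<^bsub>Sym p\<^esub>"
  proof (cases l)
    case (LA c)
    have "(p - c mod p + c) mod p = 0" using neg_mod[of c] by (simp add: add.commute)
    thus ?thesis using LA Af_mult Af_0 by simp
  next
    case (LB n)
    have "b_aut p r E (neg n) \<otimes>\<^bsub>Sym p\<^esub> b_aut p r E n = b_aut p r E (\<lambda>i. neg n i + n i)" by (rule B_mult)
    also have "\<dots> = \<one>\<^bsub>Sym p\<^esub>" using bsum_neg[of n] by (intro B_zero) (simp add: add.commute)
    finally show ?thesis using LB by simp
  qed
qed simp_all

lemma ev_invw: "ev (invw w) = inv\<^bsub>Sym p\<^esub> (ev w)"
proof (induction w)
  case Nil thus ?case by (simp add: invw_def)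
next
  case (Cons l w)
  have "ev (invw (l # w)) = ev (invw w @ [invl l])" by (simp add: invw_def)
  also have "\<dots> = ev (invw w) \<otimes>\<^bsub>Sym p\<^esub> ev [invl l]" by (rule ev_append)
  also have "ev [invl l] = inv\<^bsub>Sym p\<^esub> (evl l)" using evl_invl by simp
  finally show ?case using Cons.IH S.inv_mult_group[OF evl_carrier ev_carrier, of l w] by simp
qed

lemma Gg_word: "g \<in> Gg \<Longrightarrow> \<exists>w. g = ev w"
  unfolding multiGGS_def
proof (induction rule: generate.induct)
  case one thus ?case by (rule exI[of _ "[]"]) simp
next
  case (incl h)
  then consider "h = Af 1" | n where "h = b_aut p r E n" using a_Af by auto
  hence "\<exists>l. h = evl l" by cases (metis evl.simps(1), metis evl.simps(2))
  then obtain l where "h = evl l" by blast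
  hence "h = ev [l]" by simp
  thus ?case by blast
next
  case (inv h)
  then consider "h = Af 1" | n where "h = b_aut p r E n" using a_Af by auto
  hence "\<exists>l. h = evl l" by cases (metis evl.simps(1), metis evl.simps(2))
  then obtain l where "h = evl l" by blast
  hence "inv\<^bsub>Sym p\<^esub> h = ev [invl l]" using evl_invl by simp
  thus ?case by blast
next
  case (eng h1 h2)
  then obtain v w where "h1 = ev v" "h2 = ev w" by blast
  thus ?case using ev_append by metis
qed


lemma inv_modp: "a mod p \<noteq> 0 \<Longrightarrow> \<exists>t. (a * t) mod p = 1"
proof -
  assume "a mod p \<noteq> 0"
  hence "\<not> p dvd a" by (simp add: dvd_eq_mod_eq_0)
  hence "coprime p a" using prime_imp_coprime[OF pr] by blast
  hence "coprime a p" by (simp add: ac_simps)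
  then obtain t where "[a * t = Suc 0] (mod p)" using cong_solve_coprime_nat by blast
  hence "(a * t) mod p = 1" using p_gt1 by (simp add: cong_def)
  thus ?thesis by blast
qed

lemma row0: "\<exists>m. 0 < m \<and> m < p \<and> E 0 m mod p \<noteq> 0"
proof (rule ccontr)
  assume h: "\<not> ?thesis"
  define n where "n = (\<lambda>i::nat. if i = 0 then 1 else (0::nat))"
  have "\<forall>i<r. n i < p" unfolding n_def using p_gt1 by simp
  moreover have "\<forall>j\<in>{1..p-1}. (\<Sum>i<r. n i * E i j) mod p = 0"
  proof
    fix j assume "j \<in> {1..p-1}"
    hence "0 < j" "j < p" by auto
    hence "E 0 j mod p = 0" using h by blast
    moreover have "(\<Sum>i<r. n i * E i j) = E 0 j"
    proof -
      have "(\<Sum>i<r. n i * E i j) = (\<Sum>i<r. if i = 0 then E 0 j else 0)" unfolding n_def by (intro sum.cong) auto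
      also have "\<dots> = E 0 j" using r1 by (simp add: sum.delta)
      finally show ?thesis .
    qed
    ultimately show "(\<Sum>i<r. n i * E i j) mod p = 0" by simp
  qed
  ultimately have "\<forall>i<r. n i = 0" using lin unfolding rows_lin_indep_def by blast
  thus False using r1 unfolding n_def by auto
qed

definition Kset :: "(nat list \<Rightarrow> nat list) set" where
  "Kset = {k \<in> carrier (Sym p). lift 0 k \<in> Gr}"

lemma lift_mult: assumes k1: "k1 \<in> carrier (Sym p)" and k2: "k2 \<in> carrier (Sym p)"
  shows "lift x k1 \<otimes>\<^bsub>Sym p\<^esub> lift x k2 = lift x (k1 \<otimes>\<^bsub>Sym p\<^esub> k2)"
proof -
  have "lift x k1 \<otimes>\<^bsub>Sym p\<^esub> lift x k2 =
    mk (\<lambda>y. (if y = x then k1 else \<one>\<^bsub>Sym p\<^esub>) \<otimes>\<^bsub>Sym p\<^esub> (if y = x then k2 else \<one>\<^bsub>Sym p\<^esub>))"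
    unfolding lift_def by (rule mk_mult) (simp_all add: k1 k2 oc)
  also have "\<dots> = lift x (k1 \<otimes>\<^bsub>Sym p\<^esub> k2)"
    unfolding lift_def by (rule mk_cong) (simp add: oc)
  finally show ?thesis .
qed
lemma lift_inv: assumes k: "k \<in> carrier (Sym p)"
  shows "inv\<^bsub>Sym p\<^esub> (lift x k) = lift x (inv\<^bsub>Sym p\<^esub> k)"
proof -
  have "inv\<^bsub>Sym p\<^esub> (lift x k) = mk (\<lambda>y. inv\<^bsub>Sym p\<^esub> (if y = x then k else \<one>\<^bsub>Sym p\<^esub>))"
    unfolding lift_def by (rule mk_inv) (simp_all add: k oc)
  also have "\<dots> = lift x (inv\<^bsub>Sym p\<^esub> k)"
    unfolding lift_def by (rule mk_cong) simp
  finally show ?thesis .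
qed
lemma lift_one: "lift x \<one>\<^bsub>Sym p\<^esub> = \<one>\<^bsub>Sym p\<^esub>"
  unfolding lift_def using mk_one by simp

lemma K_carrier: "k \<in> Kset \<Longrightarrow> k \<in> carrier (Sym p)" by (simp add: Kset_def)
lemma K_one: "\<one>\<^bsub>Sym p\<^esub> \<in> Kset"
  unfolding Kset_def using lift_one subgroup.one_closed[OF Gr_sub] by simp
lemma K_mult: assumes "k1 \<in> Kset" "k2 \<in> Kset" shows "k1 \<otimes>\<^bsub>Sym p\<^esub> k2 \<in> Kset"
proof -
  have c: "k1 \<in> carrier (Sym p)" "k2 \<in> carrier (Sym p)" "lift 0 k1 \<in> Gr" "lift 0 k2 \<in> Gr"
    using assms unfolding Kset_def by auto
  have "lift 0 (k1 \<otimes>\<^bsub>Sym p\<^esub> k2) \<in> Gr"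
    unfolding lift_mult[OF c(1,2), symmetric] by (rule subgroup.m_closed[OF Gr_sub c(3,4)])
  thus ?thesis unfolding Kset_def using mc[OF c(1,2)] by simp
qed
lemma K_inv: assumes "k \<in> Kset" shows "inv\<^bsub>Sym p\<^esub> k \<in> Kset"
proof -
  have c: "k \<in> carrier (Sym p)" "lift 0 k \<in> Gr" using assms unfolding Kset_def by auto
  have "lift 0 (inv\<^bsub>Sym p\<^esub> k) \<in> Gr"
    unfolding lift_inv[OF c(1), symmetric] by (rule subgroup.m_inv_closed[OF Gr_sub c(2)])
  thus ?thesis unfolding Kset_def using ic[OF c(1)] by simp
qed

lemma conj_mk: assumes s: "\<And>y. y < p \<Longrightarrow> s y \<in> carrier (Sym p)" and k: "k \<in> carrier (Sym p)"
  shows "mk s \<otimes>\<^bsub>Sym p\<^esub> lift 0 k \<otimes>\<^bsub>Sym p\<^esub> inv\<^bsub>Sym p\<^esub> (mk s) =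
         lift 0 (s 0 \<otimes>\<^bsub>Sym p\<^esub> k \<otimes>\<^bsub>Sym p\<^esub> inv\<^bsub>Sym p\<^esub> (s 0))"
proof -
  define c where "c = (\<lambda>y::nat. if y = 0 then k else \<one>\<^bsub>Sym p\<^esub>)"
  have c1: "\<And>y. y < p \<Longrightarrow> c y \<in> carrier (Sym p)" unfolding c_def using k oc by simp
  have sc: "\<And>y. y < p \<Longrightarrow> s y \<otimes>\<^bsub>Sym p\<^esub> c y \<in> carrier (Sym p)" using s c1 by (intro mc)
  have si: "\<And>y. y < p \<Longrightarrow> inv\<^bsub>Sym p\<^esub> (s y) \<in> carrier (Sym p)" using s by (intro ic)
  have A: "mk s \<otimes>\<^bsub>Sym p\<^esub> lift 0 k = mk (\<lambda>y. s y \<otimes>\<^bsub>Sym p\<^esub> c y)"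
    unfolding lift_def c_def[symmetric] by (rule mk_mult[OF s c1])
  have B: "inv\<^bsub>Sym p\<^esub> (mk s) = mk (\<lambda>y. inv\<^bsub>Sym p\<^esub> (s y))" by (rule mk_inv[OF s])
  have C: "mk (\<lambda>y. s y \<otimes>\<^bsub>Sym p\<^esub> c y) \<otimes>\<^bsub>Sym p\<^esub> mk (\<lambda>y. inv\<^bsub>Sym p\<^esub> (s y)) =
     mk (\<lambda>y. s y \<otimes>\<^bsub>Sym p\<^esub> c y \<otimes>\<^bsub>Sym p\<^esub> inv\<^bsub>Sym p\<^esub> (s y))"
    by (rule mk_mult[OF sc si])
  have D: "mk (\<lambda>y. s y \<otimes>\<^bsub>Sym p\<^esub> c y \<otimes>\<^bsub>Sym p\<^esub> inv\<^bsub>Sym p\<^esub> (s y)) =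
     lift 0 (s 0 \<otimes>\<^bsub>Sym p\<^esub> k \<otimes>\<^bsub>Sym p\<^esub> inv\<^bsub>Sym p\<^esub> (s 0))"
    unfolding lift_def
  proof (rule mk_cong)
    fix y assume y: "y < p"
    show "s y \<otimes>\<^bsub>Sym p\<^esub> c y \<otimes>\<^bsub>Sym p\<^esub> inv\<^bsub>Sym p\<^esub> (s y) =
      (if y = 0 then s 0 \<otimes>\<^bsub>Sym p\<^esub> k \<otimes>\<^bsub>Sym p\<^esub> inv\<^bsub>Sym p\<^esub> (s 0) else \<one>\<^bsub>Sym p\<^esub>)"
    proof (cases "y = 0")
      case False
      hence "c y = \<one>\<^bsub>Sym p\<^esub>" unfolding c_def by simp
      thus ?thesis using False S.r_one[OF s[OF y]] S.r_inv[OF s[OF y]] by simp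
    qed (simp add: c_def)
  qed
  show ?thesis using A B C D by simp
qed

lemma K_conj_gen: assumes F: "mk s \<in> Gr" and s: "\<And>y. y < p \<Longrightarrow> s y \<in> carrier (Sym p)"
  and k: "k \<in> Kset"
  shows "s 0 \<otimes>\<^bsub>Sym p\<^esub> k \<otimes>\<^bsub>Sym p\<^esub> inv\<^bsub>Sym p\<^esub> (s 0) \<in> Kset"
proof -
  have kc: "k \<in> carrier (Sym p)" using k K_carrier by blast
  have "mk s \<otimes>\<^bsub>Sym p\<^esub> lift 0 k \<otimes>\<^bsub>Sym p\<^esub> inv\<^bsub>Sym p\<^esub> (mk s) \<in> Gr"
    using F k subgroup.m_closed[OF Gr_sub] subgroup.m_inv_closed[OF Gr_sub] unfolding Kset_def by auto
  hence "lift 0 (s 0 \<otimes>\<^bsub>Sym p\<^esub> k \<otimes>\<^bsub>Sym p\<^esub> inv\<^bsub>Sym p\<^esub> (s 0)) \<in> Gr"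
    using conj_mk[OF s kc] by simp
  moreover have "s 0 \<otimes>\<^bsub>Sym p\<^esub> k \<otimes>\<^bsub>Sym p\<^esub> inv\<^bsub>Sym p\<^esub> (s 0) \<in> carrier (Sym p)"
    using s[of 0] p_pos kc by (intro mc ic) auto
  ultimately show ?thesis unfolding Kset_def by simp
qed

lemma ev_single_eq: "ev [l] = evl l" by (simp add: S.r_one)

lemma sect_carrier: "(\<lambda>y. ev (sect w y)) y \<in> carrier (Sym p)" by simp

lemma K_conj_B: "k \<in> Kset \<Longrightarrow> b_aut p r E n \<otimes>\<^bsub>Sym p\<^esub> k \<otimes>\<^bsub>Sym p\<^esub> inv\<^bsub>Sym p\<^esub> (b_aut p r E n) \<in> Kset"
proof -
  assume k: "k \<in> Kset"
  have e: "ev [LB n] = mk (\<lambda>y. ev (sect [LB n] y))" by (rule stab_mk) simp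
  have "mk (\<lambda>y. ev (sect [LB n] y)) \<in> Gr" using e ev_Gg Gg_Gr by metis
  from K_conj_gen[OF this _ k] have "ev (sect [LB n] 0) \<otimes>\<^bsub>Sym p\<^esub> k \<otimes>\<^bsub>Sym p\<^esub> inv\<^bsub>Sym p\<^esub> (ev (sect [LB n] 0)) \<in> Kset"
    by simp
  moreover have "ev (sect [LB n] 0) = b_aut p r E n" using ev_single_eq[of "LB n"] by simp
  ultimately show ?thesis by simp
qed

lemma K_conj_A: "k \<in> Kset \<Longrightarrow> Af c \<otimes>\<^bsub>Sym p\<^esub> k \<otimes>\<^bsub>Sym p\<^esub> inv\<^bsub>Sym p\<^esub> (Af c) \<in> Kset"
proof -
  assume k: "k \<in> Kset"
  obtain m where m: "0 < m" "m < p" "E 0 m mod p \<noteq> 0" using row0 by blast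
  obtain t where t: "(E 0 m * t) mod p = 1" using inv_modp[OF m(3)] by blast
  define nn where "nn = (\<lambda>i::nat. if i = 0 then c * t else 0)"
  define T where "T = [LA (p - m), LB nn, LA m]"
  have aT: "Aexp T mod p = 0" unfolding T_def using m by simp
  have e: "ev T = mk (\<lambda>y. ev (sect T y))" by (rule stab_mk[OF aT])
  have "mk (\<lambda>y. ev (sect T y)) \<in> Gr" using e ev_Gg Gg_Gr by metis
  from K_conj_gen[OF this _ k] have 1: "ev (sect T 0) \<otimes>\<^bsub>Sym p\<^esub> k \<otimes>\<^bsub>Sym p\<^esub> inv\<^bsub>Sym p\<^esub> (ev (sect T 0)) \<in> Kset"
    by simp
  have "sect T 0 = [LA (bsum nn m)]" unfolding T_def using m by simp
  hence "ev (sect T 0) = Af (bsum nn m)" using ev_single_eq[of "LA (bsum nn m)"] by simp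
  moreover have "bsum nn m = c * t * E 0 m"
  proof -
    have "bsum nn m = (\<Sum>i<r. if i = 0 then c * t * E 0 m else 0)" unfolding bsum_def nn_def by (intro sum.cong) auto
    also have "\<dots> = c * t * E 0 m" using r1 by (simp add: sum.delta)
    finally show ?thesis .
  qed
  moreover have "(c * t * E 0 m) mod p = c mod p"
  proof -
    have "c * t * E 0 m = c * (E 0 m * t)" by (simp add: ac_simps)
    hence "(c * t * E 0 m) mod p = (c * ((E 0 m * t) mod p)) mod p" by (simp only: mod_mult_right_eq)
    thus ?thesis using t by simp
  qed
  ultimately have "bsum nn m mod p = c mod p" by simp
  hence "Af (bsum nn m) = Af c" by (rule Af_mod)
  hence "ev (sect T 0) = Af c" using \<open>ev (sect T 0) = Af (bsum nn m)\<close> by simp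
  thus ?thesis using 1 by simp
qed


definition cm :: "(nat list \<Rightarrow> nat list) \<Rightarrow> (nat list \<Rightarrow> nat list) \<Rightarrow> nat list \<Rightarrow> nat list" where
  "cm x y = x \<otimes>\<^bsub>Sym p\<^esub> y \<otimes>\<^bsub>Sym p\<^esub> inv\<^bsub>Sym p\<^esub> x \<otimes>\<^bsub>Sym p\<^esub> inv\<^bsub>Sym p\<^esub> y"

lemma canc1: "y \<in> carrier (Sym p) \<Longrightarrow> w \<in> carrier (Sym p) \<Longrightarrow> inv\<^bsub>Sym p\<^esub> y \<otimes>\<^bsub>Sym p\<^esub> (y \<otimes>\<^bsub>Sym p\<^esub> w) = w"
  by (simp add: S.m_assoc[symmetric])
lemma canc2: "y \<in> carrier (Sym p) \<Longrightarrow> w \<in> carrier (Sym p) \<Longrightarrow> y \<otimes>\<^bsub>Sym p\<^esub> (inv\<^bsub>Sym p\<^esub> y \<otimes>\<^bsub>Sym p\<^esub> w) = w"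
  by (simp add: S.m_assoc[symmetric])

lemma cm_carrier: "x \<in> carrier (Sym p) \<Longrightarrow> y \<in> carrier (Sym p) \<Longrightarrow> cm x y \<in> carrier (Sym p)"
  unfolding cm_def by (intro mc ic)

lemma cm_inv: "x \<in> carrier (Sym p) \<Longrightarrow> y \<in> carrier (Sym p) \<Longrightarrow> inv\<^bsub>Sym p\<^esub> (cm x y) = cm y x"
  unfolding cm_def by (simp add: S.m_assoc S.inv_mult_group)

lemma cm_mult: "x \<in> carrier (Sym p) \<Longrightarrow> y \<in> carrier (Sym p) \<Longrightarrow> z \<in> carrier (Sym p) \<Longrightarrow>
  cm x (y \<otimes>\<^bsub>Sym p\<^esub> z) = cm x y \<otimes>\<^bsub>Sym p\<^esub> (y \<otimes>\<^bsub>Sym p\<^esub> cm x z \<otimes>\<^bsub>Sym p\<^esub> inv\<^bsub>Sym p\<^esub> y)"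
  unfolding cm_def by (simp add: S.m_assoc S.inv_mult_group canc1 canc2)


lemma cm_one: "x \<in> carrier (Sym p) \<Longrightarrow> cm x \<one>\<^bsub>Sym p\<^esub> = \<one>\<^bsub>Sym p\<^esub>"
  unfolding cm_def by (simp add: S.m_assoc)

lemma K_cm_pow: assumes x: "x \<in> carrier (Sym p)" and h: "cm x (Af d) \<in> Kset"
  shows "cm x (Af (d * k)) \<in> Kset"
proof (induction k)
  case 0 thus ?case using Af_0[of 0] cm_one[OF x] K_one by simp
next
  case (Suc k)
  have "Af (d * Suc k) = Af d \<otimes>\<^bsub>Sym p\<^esub> Af (d * k)" using Af_mult by simp
  hence "cm x (Af (d * Suc k)) = cm x (Af d) \<otimes>\<^bsub>Sym p\<^esub> (Af d \<otimes>\<^bsub>Sym p\<^esub> cm x (Af (d * k)) \<otimes>\<^bsub>Sym p\<^esub> inv\<^bsub>Sym p\<^esub> (Af d))"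
    using cm_mult[OF x Af_carrier Af_carrier] by simp
  thus ?case using K_mult[OF h K_conj_A[OF Suc.IH]] by simp
qed

abbreviation "b0 \<equiv> b_aut p r E s1"

lemma comm_ba_K: "comm_ba p r E \<in> Kset"
proof -
  have "lift 0 (comm_ba p r E) \<in> Gr" using c_lift c_Gr by simp
  thus ?thesis unfolding Kset_def using comm_ba_carrier by simp
qed

lemma K_b0: "cm b0 (Af c) \<in> Kset"
proof -
  have "comm_ba p r E = cm (Af 1) b0" unfolding comm_ba_def cm_def a_Af ..
  hence "cm b0 (Af 1) \<in> Kset" using K_inv[OF comm_ba_K] cm_inv[OF Af_carrier B_carrier] by simp
  from K_cm_pow[OF B_carrier this, of c] show ?thesis by simp
qed

lemma lift_apply: "y < p \<Longrightarrow> u \<in> Wd p \<Longrightarrow> lift x k (y # u) = y # (if y = x then k u else u)"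
  unfolding lift_def by (simp add: mk_apply one_apply)

lemma lift_shift: assumes m: "m < p" and k: "k \<in> carrier (Sym p)"
  shows "Af m \<otimes>\<^bsub>Sym p\<^esub> lift 0 k = lift m k \<otimes>\<^bsub>Sym p\<^esub> Af m"
proof (rule fun_eqI[where p=p])
  show "Af m \<otimes>\<^bsub>Sym p\<^esub> lift 0 k \<in> carrier (Sym p)" using k by (intro mc lift_carrier) simp_all
  show "lift m k \<otimes>\<^bsub>Sym p\<^esub> Af m \<in> carrier (Sym p)" using k by (intro mc lift_carrier) simp_all
  fix v assume v: "v \<in> Wd p"
  show "(Af m \<otimes>\<^bsub>Sym p\<^esub> lift 0 k) v = (lift m k \<otimes>\<^bsub>Sym p\<^esub> Af m) v"
  proof (cases v)
    case Nil thus ?thesis using v mult_apply[OF Af_carrier lift_carrier[OF k] v] mult_apply[OF lift_carrier[OF k] Af_carrier v]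
      by (simp add: Af_Nil lift_def mk_Nil)
  next
    case (Cons x u)
    hence x: "x < p" and u: "u \<in> Wd p" using v by auto
    have iff: "((x + m) mod p = m) = (x = 0)"
    proof
      assume "(x + m) mod p = m"
      hence "(x + m) mod p = (0 + m) mod p" using m by simp
      thus "x = 0" using perm_inj[OF x p_pos] by simp
    qed (use m in simp)
    have ku: "k u \<in> Wd p" using carrier_maps[OF k u] .
    have "(Af m \<otimes>\<^bsub>Sym p\<^esub> lift 0 k) v = Af m (lift 0 k (x # u))"
      using mult_apply[OF Af_carrier lift_carrier[OF k] v] Cons by simp
    also have "\<dots> = ((x + m) mod p) # (if x = 0 then k u else u)"
      using lift_apply[OF x u] Af_apply[OF x] ku u by simp
    also have "\<dots> = lift m k (((x + m) mod p) # u)"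
      using lift_apply[of "(x + m) mod p" u m k] u p_pos iff by simp
    also have "\<dots> = (lift m k \<otimes>\<^bsub>Sym p\<^esub> Af m) v"
      using mult_apply[OF lift_carrier[OF k] Af_carrier v] Cons Af_apply[OF x u] by simp
    finally show ?thesis .
  qed
qed

lemma lift_from_m: assumes m: "m < p" and k: "k \<in> carrier (Sym p)" and h: "lift m k \<in> Gr"
  shows "k \<in> Kset"
proof -
  have "lift 0 k = inv\<^bsub>Sym p\<^esub> (Af m) \<otimes>\<^bsub>Sym p\<^esub> (lift m k \<otimes>\<^bsub>Sym p\<^esub> Af m)"
    using lift_shift[OF m k] canc1[OF Af_carrier lift_carrier[OF k], of m 0] by simp
  moreover have "inv\<^bsub>Sym p\<^esub> (Af m) \<in> Gr" using Gg_Gr[OF Af_Gg] subgroup.m_inv_closed[OF Gr_sub] by blast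
  moreover have "Af m \<in> Gr" using Gg_Gr[OF Af_Gg] .
  ultimately have "lift 0 k \<in> Gr" using h subgroup.m_closed[OF Gr_sub] by metis
  thus ?thesis unfolding Kset_def using k by simp
qed

lemma B_mk: "b_aut p r E n = mk (\<lambda>y. if y = 0 then b_aut p r E n else Af (bsum n y))"
  by (rule mk_eqI) (simp_all add: B_Nil B_apply0 B_apply)

lemma mk_cm: assumes s: "\<And>y. y < p \<Longrightarrow> s y \<in> carrier (Sym p)" and t: "\<And>y. y < p \<Longrightarrow> t y \<in> carrier (Sym p)"
  shows "cm (mk s) (mk t) = mk (\<lambda>y. cm (s y) (t y))"
proof -
  have si: "\<And>y. y < p \<Longrightarrow> inv\<^bsub>Sym p\<^esub> (s y) \<in> carrier (Sym p)" using s by (rule ic)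
  have it: "\<And>y. y < p \<Longrightarrow> inv\<^bsub>Sym p\<^esub> (t y) \<in> carrier (Sym p)" using t by (rule ic)
  have st: "\<And>y. y < p \<Longrightarrow> s y \<otimes>\<^bsub>Sym p\<^esub> t y \<in> carrier (Sym p)" using s t by (rule mc)
  have sts: "\<And>y. y < p \<Longrightarrow> s y \<otimes>\<^bsub>Sym p\<^esub> t y \<otimes>\<^bsub>Sym p\<^esub> inv\<^bsub>Sym p\<^esub> (s y) \<in> carrier (Sym p)"
    using st si by (rule mc)
  have "cm (mk s) (mk t) = mk (\<lambda>y. s y \<otimes>\<^bsub>Sym p\<^esub> t y) \<otimes>\<^bsub>Sym p\<^esub> mk (\<lambda>y. inv\<^bsub>Sym p\<^esub> (s y)) \<otimes>\<^bsub>Sym p\<^esub> mk (\<lambda>y. inv\<^bsub>Sym p\<^esub> (t y))"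
    by (simp only: cm_def mk_mult[OF s t] mk_inv[OF s] mk_inv[OF t])
  also have "\<dots> = mk (\<lambda>y. s y \<otimes>\<^bsub>Sym p\<^esub> t y \<otimes>\<^bsub>Sym p\<^esub> inv\<^bsub>Sym p\<^esub> (s y)) \<otimes>\<^bsub>Sym p\<^esub> mk (\<lambda>y. inv\<^bsub>Sym p\<^esub> (t y))"
    by (simp only: mk_mult[OF st si])
  also have "\<dots> = mk (\<lambda>y. cm (s y) (t y))"
    by (simp only: mk_mult[OF sts it] cm_def)
  finally show ?thesis .
qed

lemma cm_AA: "cm (Af a) (Af b) = \<one>\<^bsub>Sym p\<^esub>"
proof -
  have comm: "Af a \<otimes>\<^bsub>Sym p\<^esub> Af b = Af b \<otimes>\<^bsub>Sym p\<^esub> Af a" using Af_mult[of a b] Af_mult[of b a] by (simp add: add.commute)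
  show ?thesis unfolding cm_def comm by (simp add: S.m_assoc)
qed

lemma bsum_s1: "bsum s1 x = E 0 x"
proof -
  have "bsum s1 x = (\<Sum>i<r. if i = 0 then E 0 x else 0)" unfolding bsum_def s1_def by (intro sum.cong) auto
  also have "\<dots> = E 0 x" using r1 by (simp add: sum.delta)
  finally show ?thesis .
qed


lemma K_cm: "cm (b_aut p r E n) (Af c) \<in> Kset"
proof -
  obtain m where m: "0 < m" "m < p" "E 0 m mod p \<noteq> 0" using row0 by blast
  obtain t where t: "(E 0 m * t) mod p = 1" using inv_modp[OF m(3)] by blast
  define Tw where "Tw = [LA m, LB n, LA (p - m)]"
  define \<sigma> where "\<sigma> = (\<lambda>y. if y = 0 then b0 else Af (bsum s1 y))"
  define \<tau> where "\<tau> = (\<lambda>y. ev (sect Tw y))"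
  have sc: "\<And>y. \<sigma> y \<in> carrier (Sym p)" unfolding \<sigma>_def by simp
  have tc: "\<And>y. \<tau> y \<in> carrier (Sym p)" unfolding \<tau>_def by simp
  have aT: "Aexp Tw mod p = 0" unfolding Tw_def using m by simp
  have Tmk: "ev Tw = mk \<tau>" unfolding \<tau>_def by (rule stab_mk[OF aT])
  have b0mk: "b0 = mk \<sigma>" unfolding \<sigma>_def by (rule B_mk)
  have tau: "\<tau> y = ev (sectl (LB n) ((y + (p - m)) mod p))" for y
    unfolding \<tau>_def Tw_def by simp
  have iffm: "y < p \<Longrightarrow> ((y + (p - m)) mod p = 0) = (y = m)" for y
  proof
    assume y: "y < p" and "(y + (p - m)) mod p = 0"
    moreover have "(m + (p - m)) mod p = 0" using m by simp
    ultimately show "y = m" using perm_inj[OF y m(2), where s="p - m"] by simp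
  qed (use m in simp)
  define Y where "Y = cm b0 (ev Tw)"
  have YGr: "Y \<in> Gr" unfolding Y_def cm_def
    using Gg_Gr B_Gg ev_Gg subgroup.m_closed[OF Gg_sub] subgroup.m_inv_closed[OF Gg_sub] by metis
  have Ymk: "Y = mk (\<lambda>y. cm (\<sigma> y) (\<tau> y))" unfolding Y_def Tmk b0mk by (rule mk_cm[OF sc tc])
  define X0 where "X0 = cm (\<sigma> 0) (\<tau> 0)"
  define Xm where "Xm = cm (\<sigma> m) (\<tau> m)"
  have X0c: "X0 \<in> carrier (Sym p)" unfolding X0_def by (rule cm_carrier[OF sc tc])
  have Xmc: "Xm \<in> carrier (Sym p)" unfolding Xm_def by (rule cm_carrier[OF sc tc])
  have t0: "\<tau> 0 = Af (bsum n (p - m))" using tau[of 0] m ev_single_eq[of "LA (bsum n (p - m))"] by simp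
  have X0K: "X0 \<in> Kset" unfolding X0_def \<sigma>_def t0 using K_b0 by simp
  have tm: "\<tau> m = b_aut p r E n" using tau[of m] m ev_single_eq[of "LB n"] by simp
  have sm: "\<sigma> m = Af (E 0 m)" unfolding \<sigma>_def using m bsum_s1 by simp
  have "lift 0 X0 \<otimes>\<^bsub>Sym p\<^esub> lift m Xm =
        mk (\<lambda>y. (if y = 0 then X0 else \<one>\<^bsub>Sym p\<^esub>) \<otimes>\<^bsub>Sym p\<^esub> (if y = m then Xm else \<one>\<^bsub>Sym p\<^esub>))"
    unfolding lift_def by (rule mk_mult) (simp_all add: X0c Xmc oc)
  also have "\<dots> = mk (\<lambda>y. cm (\<sigma> y) (\<tau> y))"
  proof (rule mk_cong)
    fix y assume y: "y < p"
    show "(if y = 0 then X0 else \<one>\<^bsub>Sym p\<^esub>) \<otimes>\<^bsub>Sym p\<^esub> (if y = m then Xm else \<one>\<^bsub>Sym p\<^esub>) = cm (\<sigma> y) (\<tau> y)"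
    proof (cases "y = 0")
      case True thus ?thesis using m X0c unfolding X0_def by simp
    next
      case False
      show ?thesis
      proof (cases "y = m")
        case True thus ?thesis using Xmc False unfolding Xm_def by simp
      next
        case ym: False
        have "(y + (p - m)) mod p \<noteq> 0" using iffm[OF y] ym by simp
        hence "\<tau> y = Af (bsum n ((y + (p - m)) mod p))"
          using tau[of y] ev_single_eq[of "LA (bsum n ((y + (p - m)) mod p))"] by simp
        moreover have "\<sigma> y = Af (bsum s1 y)" unfolding \<sigma>_def using False by simp
        ultimately show ?thesis using False ym cm_AA by (simp add: oc)
      qed
    qed
  qed
  finally have "Y = lift 0 X0 \<otimes>\<^bsub>Sym p\<^esub> lift m Xm" using Ymk by simp
  hence "lift m Xm = inv\<^bsub>Sym p\<^esub> (lift 0 X0) \<otimes>\<^bsub>Sym p\<^esub> Y"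
    using canc1[OF lift_carrier[OF X0c] lift_carrier[OF Xmc]] by simp
  moreover have "inv\<^bsub>Sym p\<^esub> (lift 0 X0) \<in> Gr"
    using X0K subgroup.m_inv_closed[OF Gr_sub] unfolding Kset_def by simp
  ultimately have "lift m Xm \<in> Gr" using YGr subgroup.m_closed[OF Gr_sub] by simp
  hence XmK: "Xm \<in> Kset" by (rule lift_from_m[OF m(2) Xmc])
  have "cm (b_aut p r E n) (Af (E 0 m)) \<in> Kset"
    using K_inv[OF XmK] cm_inv[OF Af_carrier B_carrier] unfolding Xm_def sm tm by simp
  from K_cm_pow[OF B_carrier this, of t] have "cm (b_aut p r E n) (Af (E 0 m * t)) \<in> Kset" .
  moreover have "Af (E 0 m * t) = Af 1" using t p_gt1 by (intro Af_mod) simp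
  ultimately have "cm (b_aut p r E n) (Af 1) \<in> Kset" by simp
  from K_cm_pow[OF B_carrier this, of c] show ?thesis by simp
qed


lemma regroupB: "B \<in> carrier (Sym p) \<Longrightarrow> k \<in> carrier (Sym p) \<Longrightarrow> A \<in> carrier (Sym p) \<Longrightarrow> T \<in> carrier (Sym p) \<Longrightarrow>
  B \<otimes>\<^bsub>Sym p\<^esub> (k \<otimes>\<^bsub>Sym p\<^esub> A \<otimes>\<^bsub>Sym p\<^esub> T) =
  ((B \<otimes>\<^bsub>Sym p\<^esub> k \<otimes>\<^bsub>Sym p\<^esub> inv\<^bsub>Sym p\<^esub> B) \<otimes>\<^bsub>Sym p\<^esub> cm B A) \<otimes>\<^bsub>Sym p\<^esub> A \<otimes>\<^bsub>Sym p\<^esub> (B \<otimes>\<^bsub>Sym p\<^esub> T)"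
  by (simp add: cm_def S.m_assoc canc1 canc2)

lemma regroupA: "B \<in> carrier (Sym p) \<Longrightarrow> k \<in> carrier (Sym p) \<Longrightarrow> A \<in> carrier (Sym p) \<Longrightarrow> T \<in> carrier (Sym p) \<Longrightarrow>
  B \<otimes>\<^bsub>Sym p\<^esub> (k \<otimes>\<^bsub>Sym p\<^esub> A \<otimes>\<^bsub>Sym p\<^esub> T) =
  (B \<otimes>\<^bsub>Sym p\<^esub> k \<otimes>\<^bsub>Sym p\<^esub> inv\<^bsub>Sym p\<^esub> B) \<otimes>\<^bsub>Sym p\<^esub> (B \<otimes>\<^bsub>Sym p\<^esub> A) \<otimes>\<^bsub>Sym p\<^esub> T"
  by (simp add: S.m_assoc canc1 canc2)

lemma normal_form: "\<exists>k\<in>Kset. ev v = k \<otimes>\<^bsub>Sym p\<^esub> Af (Aexp v) \<otimes>\<^bsub>Sym p\<^esub> b_aut p r E (Bwt v)"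
proof (induction v)
  case Nil
  have "b_aut p r E (\<lambda>_. 0) = \<one>\<^bsub>Sym p\<^esub>" by (rule B_zero) (simp add: bsum_def)
  moreover have "Af (Aexp []) = \<one>\<^bsub>Sym p\<^esub>" using Af_0 by simp
  ultimately show ?case using K_one by (intro bexI[of _ "\<one>\<^bsub>Sym p\<^esub>"]) simp_all
next
  case (Cons l v)
  then obtain k where k: "k \<in> Kset" and e: "ev v = k \<otimes>\<^bsub>Sym p\<^esub> Af (Aexp v) \<otimes>\<^bsub>Sym p\<^esub> b_aut p r E (Bwt v)" by blast
  have kc: "k \<in> carrier (Sym p)" using k K_carrier by blast
  show ?case
  proof (cases l)
    case (LA c)
    have "ev (l # v) = Af c \<otimes>\<^bsub>Sym p\<^esub> (k \<otimes>\<^bsub>Sym p\<^esub> Af (Aexp v) \<otimes>\<^bsub>Sym p\<^esub> b_aut p r E (Bwt v))"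
      using LA e by simp
    also have "\<dots> = (Af c \<otimes>\<^bsub>Sym p\<^esub> k \<otimes>\<^bsub>Sym p\<^esub> inv\<^bsub>Sym p\<^esub> (Af c)) \<otimes>\<^bsub>Sym p\<^esub> (Af c \<otimes>\<^bsub>Sym p\<^esub> Af (Aexp v)) \<otimes>\<^bsub>Sym p\<^esub> b_aut p r E (Bwt v)"
      by (rule regroupA[OF Af_carrier kc Af_carrier B_carrier])
    also have "Af c \<otimes>\<^bsub>Sym p\<^esub> Af (Aexp v) = Af (Aexp (l # v))" using LA Af_mult by simp
    also have "Bwt v = Bwt (l # v)" using LA by (intro ext) simp
    finally show ?thesis using K_conj_A[OF k] by blast
  next
    case (LB n)
    have "ev (l # v) = b_aut p r E n \<otimes>\<^bsub>Sym p\<^esub> (k \<otimes>\<^bsub>Sym p\<^esub> Af (Aexp v) \<otimes>\<^bsub>Sym p\<^esub> b_aut p r E (Bwt v))"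
      using LB e by simp
    also have "\<dots> = ((b_aut p r E n \<otimes>\<^bsub>Sym p\<^esub> k \<otimes>\<^bsub>Sym p\<^esub> inv\<^bsub>Sym p\<^esub> (b_aut p r E n)) \<otimes>\<^bsub>Sym p\<^esub> cm (b_aut p r E n) (Af (Aexp v)))
       \<otimes>\<^bsub>Sym p\<^esub> Af (Aexp v) \<otimes>\<^bsub>Sym p\<^esub> (b_aut p r E n \<otimes>\<^bsub>Sym p\<^esub> b_aut p r E (Bwt v))"
      by (rule regroupB[OF B_carrier kc Af_carrier B_carrier])
    also have "b_aut p r E n \<otimes>\<^bsub>Sym p\<^esub> b_aut p r E (Bwt v) = b_aut p r E (Bwt (l # v))"
    proof -
      have "Bwt (l # v) = (\<lambda>i. n i + Bwt v i)" using LB by (intro ext) simp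
      thus ?thesis using B_mult by simp
    qed
    also have "Aexp v = Aexp (l # v)" using LB by simp
    finally show ?thesis using K_mult[OF K_conj_B[OF k] K_cm] by blast
  qed
qed

lemma ev_zero_K: assumes a: "Aexp v mod p = 0" and b: "\<And>i. i < r \<Longrightarrow> Bwt v i mod p = 0"
  shows "ev v \<in> Kset"
proof -
  obtain k where k: "k \<in> Kset" and e: "ev v = k \<otimes>\<^bsub>Sym p\<^esub> Af (Aexp v) \<otimes>\<^bsub>Sym p\<^esub> b_aut p r E (Bwt v)"
    using normal_form by blast
  have "b_aut p r E (Bwt v) = \<one>\<^bsub>Sym p\<^esub>"
  proof (rule B_zero)
    fix x
    have "\<And>i. i \<in> {..<r} \<Longrightarrow> Bwt v i * E i x mod p = 0" using b by (simp add: mod_mult_left_eq[symmetric])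
    thus "bsum (Bwt v) x mod p = 0" unfolding bsum_def by (intro sum_mod0) auto
  qed
  moreover have "Af (Aexp v) = \<one>\<^bsub>Sym p\<^esub>" using Af_0[OF a] .
  ultimately show ?thesis using e k K_carrier[OF k] by simp
qed

lemma lift_Gr: "k \<in> Kset \<Longrightarrow> x < p \<Longrightarrow> lift x k \<in> Gr"
proof -
  assume k: "k \<in> Kset" and x: "x < p"
  have kc: "k \<in> carrier (Sym p)" using k K_carrier by blast
  have "lift x k = lift x k \<otimes>\<^bsub>Sym p\<^esub> Af x \<otimes>\<^bsub>Sym p\<^esub> inv\<^bsub>Sym p\<^esub> (Af x)"
    using lift_carrier[OF kc] by (simp add: S.m_assoc)
  also have "\<dots> = Af x \<otimes>\<^bsub>Sym p\<^esub> lift 0 k \<otimes>\<^bsub>Sym p\<^esub> inv\<^bsub>Sym p\<^esub> (Af x)"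
    by (simp only: lift_shift[OF x kc])
  finally have "lift x k = Af x \<otimes>\<^bsub>Sym p\<^esub> lift 0 k \<otimes>\<^bsub>Sym p\<^esub> inv\<^bsub>Sym p\<^esub> (Af x)" .
  moreover have "Af x \<in> Gr" "inv\<^bsub>Sym p\<^esub> (Af x) \<in> Gr" "lift 0 k \<in> Gr"
    using Gg_Gr[OF Af_Gg] subgroup.m_inv_closed[OF Gr_sub] k unfolding Kset_def by auto
  ultimately show ?thesis using subgroup.m_closed[OF Gr_sub] by metis
qed

lemma branch: assumes z: "\<And>y. y < p \<Longrightarrow> z y \<in> Kset" shows "mk z \<in> Gr"
proof -
  have zc: "\<And>y. y < p \<Longrightarrow> z y \<in> carrier (Sym p)" using z K_carrier by blast
  have A: "mk (\<lambda>y. if y < n then z y else \<one>\<^bsub>Sym p\<^esub>) \<in> Gr" for n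
  proof (induction n)
    case 0 thus ?case using mk_one subgroup.one_closed[OF Gr_sub] by simp
  next
    case (Suc n)
    show ?case
    proof (cases "n < p")
      case True
      have eq1: "mk (\<lambda>y. if y < n then z y else \<one>\<^bsub>Sym p\<^esub>) \<otimes>\<^bsub>Sym p\<^esub> lift n (z n) =
         mk (\<lambda>y. (if y < n then z y else \<one>\<^bsub>Sym p\<^esub>) \<otimes>\<^bsub>Sym p\<^esub> (if y = n then z n else \<one>\<^bsub>Sym p\<^esub>))"
        unfolding lift_def by (rule mk_mult) (simp_all add: zc oc True)
      also have "\<dots> = mk (\<lambda>y. if y < Suc n then z y else \<one>\<^bsub>Sym p\<^esub>)"
      proof (rule mk_cong)
        fix y assume y: "y < p"
        show "(if y < n then z y else \<one>\<^bsub>Sym p\<^esub>) \<otimes>\<^bsub>Sym p\<^esub> (if y = n then z n else \<one>\<^bsub>Sym p\<^esub>) =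
              (if y < Suc n then z y else \<one>\<^bsub>Sym p\<^esub>)"
        proof (cases "y < n")
          case True thus ?thesis using S.r_one[OF zc[OF y]] by simp
        next
          case False
          show ?thesis
          proof (cases "y = n")
            case True thus ?thesis using S.l_one[OF zc[OF y]] by simp
          next
            case False2: False
            thus ?thesis using False S.l_one[OF oc] by simp
          qed
        qed
      qed
      finally have eq: "mk (\<lambda>y. if y < n then z y else \<one>\<^bsub>Sym p\<^esub>) \<otimes>\<^bsub>Sym p\<^esub> lift n (z n) = mk (\<lambda>y. if y < Suc n then z y else \<one>\<^bsub>Sym p\<^esub>)" .
      have "mk (\<lambda>y. if y < n then z y else \<one>\<^bsub>Sym p\<^esub>) \<otimes>\<^bsub>Sym p\<^esub> lift n (z n) \<in> Gr"
        by (rule subgroup.m_closed[OF Gr_sub Suc.IH lift_Gr[OF z[OF True] True]])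
      thus ?thesis using eq by simp
    next
      case False
      have "mk (\<lambda>y. if y < Suc n then z y else \<one>\<^bsub>Sym p\<^esub>) = mk (\<lambda>y. if y < n then z y else \<one>\<^bsub>Sym p\<^esub>)"
      proof (rule mk_cong)
        fix y assume "y < p"
        hence "y < n" "y < Suc n" using False by auto
        thus "(if y < Suc n then z y else \<one>\<^bsub>Sym p\<^esub>) = (if y < n then z y else \<one>\<^bsub>Sym p\<^esub>)" by simp
      qed
      thus ?thesis using Suc.IH by simp
    qed
  qed
  have B: "mk (\<lambda>y. if y < p then z y else \<one>\<^bsub>Sym p\<^esub>) = mk z" by (rule mk_cong) simp
  show ?thesis using A[of p] unfolding B .
qed


lemma sect_append: "sect (v @ u) x = sect v ((x + Aexp u) mod p) @ sect u x"
proof (induction v)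
  case Nil thus ?case by simp
next
  case (Cons l v)
  have "(((x + Aexp u) mod p) + Aexp v) mod p = ((x + Aexp u) + Aexp v) mod p"
    by (rule mod_add_left_eq)
  hence "(((x + Aexp u) mod p) + Aexp v) mod p = (x + (Aexp v + Aexp u)) mod p"
    by (simp add: ac_simps)
  thus ?case using Cons.IH by simp
qed

definition wpow :: "lt list \<Rightarrow> nat \<Rightarrow> lt list" where "wpow w k = concat (replicate k w)"

lemma wpow_Suc: "wpow w (Suc k) = w @ wpow w k" by (simp add: wpow_def)
lemma wpow_add: "wpow w (k + l) = wpow w k @ wpow w l" by (simp add: wpow_def replicate_add)
lemma Aexp_wpow: "Aexp (wpow w k) = k * Aexp w"
  by (induction k) (simp_all add: wpow_Suc wpow_def)
lemma ev_wpow: "ev (wpow w k) = ev w [^]\<^bsub>Sym p\<^esub> k"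
proof (induction k)
  case 0 thus ?case by (simp add: wpow_def)
next
  case (Suc k)
  thus ?case using S.nat_pow_Suc2[OF ev_carrier, of w k] ev_append[of w "wpow w k"] by (simp add: wpow_Suc)
qed

lemma Aexp_invw: "(Aexp (invw v) + Aexp v) mod p = 0"
proof (induction v)
  case Nil thus ?case by (simp add: invw_def)
next
  case (Cons l v)
  have e: "invw (l # v) = invw v @ [invl l]" by (simp add: invw_def)
  show ?case
  proof (cases l)
    case (LA c)
    have "Aexp (invw (l # v)) + Aexp (l # v) = (Aexp (invw v) + Aexp v) + ((p - c mod p) + c)"
      using e LA by simp
    moreover have "((p - c mod p) + c) mod p = 0" using neg_mod[of c] by (simp add: add.commute)
    ultimately show ?thesis using Cons.IH by (metis dvd_add dvd_eq_mod_eq_0)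
  next
    case (LB n)
    thus ?thesis using e Cons.IH by simp
  qed
qed

lemma Bwt_invw: "(Bwt (invw v) i + Bwt v i) mod p = 0"
proof (induction v)
  case Nil thus ?case by (simp add: invw_def)
next
  case (Cons l v)
  have e: "invw (l # v) = invw v @ [invl l]" by (simp add: invw_def)
  show ?case
  proof (cases l)
    case (LB n)
    have "Bwt (invw (l # v)) i + Bwt (l # v) i = (Bwt (invw v) i + Bwt v i) + (neg n i + n i)"
      using e LB by simp
    moreover have "(neg n i + n i) mod p = 0" using neg_mod[of "n i"] by (simp add: add.commute neg_def)
    ultimately show ?thesis using Cons.IH by (metis dvd_add dvd_eq_mod_eq_0)
  next
    case (LA c)
    thus ?thesis using e Cons.IH by simp
  qed
qed

definition vk :: "(nat \<Rightarrow> nat \<Rightarrow> nat) \<Rightarrow> nat \<Rightarrow> lt list" where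
  "vk \<beta> k = [LA k, LB (\<beta> k), LA (p - k)]"
definition Wb :: "(nat \<Rightarrow> nat \<Rightarrow> nat) \<Rightarrow> nat \<Rightarrow> lt list" where
  "Wb \<beta> n = concat (map (vk \<beta>) [0..<n])"

lemma Aexp_vk: "k < p \<Longrightarrow> Aexp (vk \<beta> k) = p" by (simp add: vk_def)

lemma Bwt_sect_vk: "k < p \<Longrightarrow> y < p \<Longrightarrow> Bwt (sect (vk \<beta> k) y) i = (if y = k then \<beta> k i else 0)"
proof -
  assume k: "k < p" and y: "y < p"
  have iff: "((y + (p - k)) mod p = 0) = (y = k)"
  proof
    assume "(y + (p - k)) mod p = 0"
    moreover have "(k + (p - k)) mod p = 0" using k by simp
    ultimately show "y = k" using perm_inj[OF y k, where s="p - k"] by simp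
  qed (use k in simp)
  have "sect (vk \<beta> k) y = sectl (LB (\<beta> k)) ((y + (p - k)) mod p)" by (simp add: vk_def)
  thus ?thesis using iff by simp
qed

lemma Wb_props: "n \<le> p \<Longrightarrow> Aexp (Wb \<beta> n) = n * p \<and> (\<forall>y<p. \<forall>i. Bwt (sect (Wb \<beta> n) y) i = (if y < n then \<beta> y i else 0))"
proof (induction n)
  case 0 thus ?case by (simp add: Wb_def)
next
  case (Suc n)
  have n: "n < p" using Suc.prems by simp
  have e: "Wb \<beta> (Suc n) = Wb \<beta> n @ vk \<beta> n" by (simp add: Wb_def)
  have IH: "Aexp (Wb \<beta> n) = n * p" "\<And>y i. y < p \<Longrightarrow> Bwt (sect (Wb \<beta> n) y) i = (if y < n then \<beta> y i else 0)"
    using Suc.IH n by auto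
  have A: "Aexp (Wb \<beta> (Suc n)) = Suc n * p" using e IH(1) Aexp_vk[OF n] by simp
  have "Bwt (sect (Wb \<beta> (Suc n)) y) i = (if y < Suc n then \<beta> y i else 0)" if y: "y < p" for y i
  proof -
    have "(y + Aexp (vk \<beta> n)) mod p = y" using Aexp_vk[OF n] y by simp
    hence "sect (Wb \<beta> (Suc n)) y = sect (Wb \<beta> n) y @ sect (vk \<beta> n) y" using e sect_append by simp
    thus ?thesis using IH(2)[OF y] Bwt_sect_vk[OF n y] by auto
  qed
  thus ?case using A by blast
qed

lemma epsb_cong: "(\<And>i. i < r \<Longrightarrow> a i mod p = b i mod p) \<Longrightarrow> epsb a d mod p = epsb b d mod p"
proof -
  assume h: "\<And>i. i < r \<Longrightarrow> a i mod p = b i mod p"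
  have "[(\<Sum>i<r. a i * E i d) = (\<Sum>i<r. b i * E i d)] (mod p)"
    by (rule cong_sum) (use h in \<open>auto simp: cong_def intro: mod_mult_cong\<close>)
  thus ?thesis by (simp add: epsb_def bsum_def cong_def)
qed


lemma dif_int: "y < p \<Longrightarrow> int (dif x y) = (int x - int y) mod int p"
proof -
  assume y: "y < p"
  have "int (dif x y) = int (x + p - y) mod int p" unfolding dif_def by (simp only: of_nat_mod)
  also have "int (x + p - y) = (int x - int y) + int p" using y by simp
  also have "((int x - int y) + int p) mod int p = (int x - int y) mod int p" by simp
  finally show ?thesis .
qed

lemma dif_shift2: "x < p \<Longrightarrow> y < p \<Longrightarrow> dif ((x + s) mod p) ((y + s) mod p) = dif x y"
proof -
  assume x: "x < p" and y: "y < p"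
  have ys: "(y + s) mod p < p" using p_pos by simp
  have "int (dif ((x + s) mod p) ((y + s) mod p)) = (int ((x + s) mod p) - int ((y + s) mod p)) mod int p"
    by (rule dif_int[OF ys])
  also have "int ((x + s) mod p) = (int x + int s) mod int p" by (simp only: of_nat_mod of_nat_add)
  also have "int ((y + s) mod p) = (int y + int s) mod int p" by (simp only: of_nat_mod of_nat_add)
  also have "((int x + int s) mod int p - (int y + int s) mod int p) mod int p = ((int x + int s) - (int y + int s)) mod int p"
    by (rule mod_diff_eq)
  also have "(int x + int s) - (int y + int s) = int x - int y" by simp
  also have "(int x - int y) mod int p = int (dif x y)" by (rule dif_int[OF y, symmetric])
  finally show ?thesis by simp
qed

lemma sum_perm_inv: "(\<Sum>y<p. (f y :: nat)) = (\<Sum>x<p. f ((x + s) mod p))"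
  using sum_perm[of f s] by simp

context
  fixes w :: "lt list" and j :: nat
  assumes Anz: "Aexp w mod p \<noteq> 0" and isidp: "isid (wpow w p)" and jinv: "(Aexp w * j) mod p = 1"
begin

definition H :: "nat \<Rightarrow> lt list" where "H k = sect (wpow w k) 0"
definition kx :: "nat \<Rightarrow> nat" where "kx x = (x * j) mod p"
definition eta :: "nat \<Rightarrow> lt list" where "eta x = H (kx x)"

lemma H_0: "H 0 = []" by (simp add: H_def wpow_def)
lemma H_Suc: "H (Suc k) = sect w ((k * Aexp w) mod p) @ H k"
  unfolding H_def wpow_Suc sect_append Aexp_wpow by simp
lemma isid_Hp: "isid (H p)" unfolding H_def using isid_sect[OF isidp p_pos] .
lemma kx_lt: "kx x < p" unfolding kx_def using p_pos by simp
lemma kx_prop: "x < p \<Longrightarrow> (kx x * Aexp w) mod p = x"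
proof -
  assume x: "x < p"
  have "(kx x * Aexp w) mod p = (x * j * Aexp w) mod p" unfolding kx_def by (simp add: mod_mult_left_eq)
  also have "x * j * Aexp w = x * (Aexp w * j)" by (simp add: ac_simps)
  also have "(x * (Aexp w * j)) mod p = (x * ((Aexp w * j) mod p)) mod p" by (simp add: mod_mult_right_eq)
  finally show ?thesis using jinv x p_gt1 by simp
qed
lemma eta_0: "eta 0 = []" unfolding eta_def kx_def using H_0 by simp

lemma kx_step: "x < p \<Longrightarrow> kx ((x + Aexp w) mod p) = (kx x + 1) mod p"
proof -
  assume x: "x < p"
  have "kx ((x + Aexp w) mod p) = ((x + Aexp w) * j) mod p" unfolding kx_def by (simp add: mod_mult_left_eq)
  also have "(x + Aexp w) * j = x * j + Aexp w * j" by (simp add: algebra_simps)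
  also have "(x * j + Aexp w * j) mod p = (kx x + 1) mod p"
    unfolding kx_def using jinv p_gt1 by (intro mod_add_cong) simp_all
  finally show ?thesis .
qed

lemma step: assumes x: "x < p"
  shows "(eta ((x + Aexp w) mod p) = sect w x @ eta x) \<or>
         (eta ((x + Aexp w) mod p) = [] \<and> isid (sect w x @ eta x))"
proof -
  define k where "k = kx x"
  have k: "k < p" unfolding k_def by (rule kx_lt)
  have HS: "H (Suc k) = sect w x @ eta x" unfolding eta_def k_def[symmetric] H_Suc using kx_prop[OF x] k_def by simp
  show ?thesis
  proof (cases "Suc k < p")
    case True
    hence "eta ((x + Aexp w) mod p) = H (Suc k)" unfolding eta_def kx_step[OF x] k_def[symmetric] by simp
    thus ?thesis using HS by simp
  next
    case False
    hence kp: "Suc k = p" using k by simp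
    hence "eta ((x + Aexp w) mod p) = H 0" unfolding eta_def kx_step[OF x] k_def[symmetric] by simp
    thus ?thesis using HS kp isid_Hp H_0 by simp
  qed
qed

lemma isid_one: "isid v \<Longrightarrow> ev v = \<one>\<^bsub>Sym p\<^esub>"
  unfolding isid_def by (intro fun_eqI[where p=p]) (simp_all add: oc one_apply)

lemma ev_step: "x < p \<Longrightarrow> ev (eta ((x + Aexp w) mod p)) = ev (sect w x) \<otimes>\<^bsub>Sym p\<^esub> ev (eta x)"
  using step[of x] ev_append[of "sect w x" "eta x"] isid_one by auto

lemma A_step: "x < p \<Longrightarrow> Aexp (eta ((x + Aexp w) mod p)) mod p = (Aexp (sect w x) + Aexp (eta x)) mod p"
  using step[of x] isid_Aexp[of "sect w x @ eta x"] by auto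

lemma B_step: "x < p \<Longrightarrow> i < r \<Longrightarrow> Bwt (eta ((x + Aexp w) mod p)) i mod p = (Bwt (sect w x) i + Bwt (eta x) i) mod p"
  using step[of x] isid_Bwt[of "sect w x @ eta x" i] by auto


definition Cv :: "nat \<Rightarrow> nat" where "Cv x = (\<Sum>y<p. epsb (Bwt (eta y)) (dif x y))"

lemma Cv_step: assumes x: "x < p"
  shows "Cv ((x + Aexp w) mod p) mod p = (Aexp (sect w x) + Cv x) mod p"
proof -
  define x' where "x' = (x + Aexp w) mod p"
  have "Cv x' = (\<Sum>y<p. epsb (Bwt (eta ((y + Aexp w) mod p))) (dif x' ((y + Aexp w) mod p)))"
    unfolding Cv_def by (rule sum_perm_inv)
  also have "\<dots> = (\<Sum>y<p. epsb (Bwt (eta ((y + Aexp w) mod p))) (dif x y))"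
    unfolding x'_def by (intro sum.cong refl) (simp add: dif_shift2[OF x])
  finally have 1: "Cv x' = (\<Sum>y<p. epsb (Bwt (eta ((y + Aexp w) mod p))) (dif x y))" .
  have "[(\<Sum>y<p. epsb (Bwt (eta ((y + Aexp w) mod p))) (dif x y)) =
         (\<Sum>y<p. epsb (Bwt (sect w y)) (dif x y) + epsb (Bwt (eta y)) (dif x y))] (mod p)"
  proof (rule cong_sum)
    fix y assume "y \<in> {..<p}"
    hence y: "y < p" by simp
    have "epsb (Bwt (eta ((y + Aexp w) mod p))) (dif x y) mod p = epsb (\<lambda>i. Bwt (sect w y) i + Bwt (eta y) i) (dif x y) mod p"
      by (rule epsb_cong) (simp add: B_step[OF y])
    thus "[epsb (Bwt (eta ((y + Aexp w) mod p))) (dif x y) = epsb (Bwt (sect w y)) (dif x y) + epsb (Bwt (eta y)) (dif x y)] (mod p)"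
      by (simp add: cong_def epsb_add)
  qed
  also have "(\<Sum>y<p. epsb (Bwt (sect w y)) (dif x y) + epsb (Bwt (eta y)) (dif x y)) =
       (\<Sum>y<p. epsb (Bwt (sect w y)) (dif x y)) + Cv x" unfolding Cv_def by (simp add: sum.distrib)
  finally have 2: "Cv x' mod p = ((\<Sum>y<p. epsb (Bwt (sect w y)) (dif x y)) + Cv x) mod p"
    using 1 by (simp add: cong_def)
  have 3: "(\<Sum>y<p. epsb (Bwt (sect w y)) (dif x y)) mod p = Aexp (sect w x) mod p" using conv[OF x] by simp
  show ?thesis using 2 3 unfolding x'_def by (metis mod_add_cong)
qed

lemma P_all: assumes x: "x < p" shows "(Aexp (eta x) + Cv 0) mod p = Cv x mod p"
proof -
  have "(Aexp (eta ((k * Aexp w) mod p)) + Cv 0) mod p = Cv ((k * Aexp w) mod p) mod p" for k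
  proof (induction k)
    case 0 thus ?case using eta_0 by simp
  next
    case (Suc k)
    define y where "y = (k * Aexp w) mod p"
    have y: "y < p" unfolding y_def using p_pos by simp
    have e: "(Suc k * Aexp w) mod p = (y + Aexp w) mod p" unfolding y_def mod_add_left_eq by (simp add: add.commute)
    have a: "Aexp (eta ((y + Aexp w) mod p)) mod p = (Aexp (sect w y) + Aexp (eta y)) mod p" by (rule A_step[OF y])
    have ih: "(Aexp (eta y) + Cv 0) mod p = Cv y mod p" using Suc.IH unfolding y_def .
    have c: "Cv ((y + Aexp w) mod p) mod p = (Aexp (sect w y) + Cv y) mod p" by (rule Cv_step[OF y])
    have "(Aexp (eta ((y + Aexp w) mod p)) + Cv 0) mod p = ((Aexp (sect w y) + Aexp (eta y)) + Cv 0) mod p"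
      using a by (metis mod_add_cong mod_mod_trivial)
    also have "\<dots> = (Aexp (sect w y) + (Aexp (eta y) + Cv 0)) mod p" by (simp add: ac_simps)
    also have "\<dots> = (Aexp (sect w y) + Cv y) mod p" using ih by (metis mod_add_cong mod_mod_trivial)
    also have "\<dots> = Cv ((y + Aexp w) mod p) mod p" using c by simp
    finally show ?case unfolding e .
  qed
  from this[of "kx x"] show ?thesis using kx_prop[OF x] by simp
qed

definition fw :: "nat \<Rightarrow> lt list" where "fw y = eta y @ [LA (Cv 0)]"
definition Fm :: "nat list \<Rightarrow> nat list" where "Fm = mk (\<lambda>y. ev (fw y))"

lemma Fm_carrier: "Fm \<in> carrier (Sym p)" unfolding Fm_def by (rule mk_carrier) simp

lemma F_conj: "Fm \<otimes>\<^bsub>Sym p\<^esub> Af (Aexp w) = ev w \<otimes>\<^bsub>Sym p\<^esub> Fm"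
proof (rule fun_eqI[where p=p])
  show "Fm \<otimes>\<^bsub>Sym p\<^esub> Af (Aexp w) \<in> carrier (Sym p)" by (intro mc Fm_carrier Af_carrier)
  show "ev w \<otimes>\<^bsub>Sym p\<^esub> Fm \<in> carrier (Sym p)" by (intro mc Fm_carrier ev_carrier)
  fix v assume v: "v \<in> Wd p"
  show "(Fm \<otimes>\<^bsub>Sym p\<^esub> Af (Aexp w)) v = (ev w \<otimes>\<^bsub>Sym p\<^esub> Fm) v"
  proof (cases v)
    case Nil thus ?thesis using mult_apply[OF Fm_carrier Af_carrier v] mult_apply[OF ev_carrier Fm_carrier v]
      by (simp add: Fm_def mk_Nil Af_Nil ev_Nil)
  next
    case (Cons x u)
    hence x: "x < p" and u: "u \<in> Wd p" using v by auto
    define x' where "x' = (x + Aexp w) mod p"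
    have x': "x' < p" unfolding x'_def using p_pos by simp
    define u' where "u' = Af (Cv 0) u"
    have u': "u' \<in> Wd p" unfolding u'_def using carrier_maps[OF Af_carrier u] .
    have fwa: "\<And>y. ev (fw y) u = ev (eta y) u'" unfolding fw_def u'_def
      using ev_app_apply[OF u] ev_single[OF u] by simp
    have "(Fm \<otimes>\<^bsub>Sym p\<^esub> Af (Aexp w)) v = Fm (x' # u)"
      using mult_apply[OF Fm_carrier Af_carrier v] Cons Af_apply[OF x u] x'_def by simp
    also have "\<dots> = x' # ev (eta x') u'" using mk_apply[OF x' u] fwa unfolding Fm_def by simp
    also have "ev (eta x') u' = ev (sect w x) (ev (eta x) u')"
      using ev_step[OF x] mult_apply[OF ev_carrier ev_carrier u'] unfolding x'_def by simp
    also have "x' # ev (sect w x) (ev (eta x) u') = ev w (x # ev (eta x) u')"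
      using ev_apply[OF x ev_maps[OF u']] x'_def by simp
    also have "\<dots> = ev w (Fm v)" using mk_apply[OF x u] fwa Cons unfolding Fm_def by simp
    also have "\<dots> = (ev w \<otimes>\<^bsub>Sym p\<^esub> Fm) v" using mult_apply[OF ev_carrier Fm_carrier v] by simp
    finally show ?thesis .
  qed
qed

lemma F_Gr: "Fm \<in> Gr"
proof -
  define \<beta> where "\<beta> = (\<lambda>y i. Bwt (eta y) i)"
  define W where "W = Wb \<beta> p"
  have WA: "Aexp W = p * p" and WB: "\<And>y i. y < p \<Longrightarrow> Bwt (sect W y) i = Bwt (eta y) i"
    using Wb_props[of p \<beta>] unfolding W_def \<beta>_def by auto
  have WBf: "\<And>y. y < p \<Longrightarrow> Bwt (sect W y) = Bwt (eta y)" using WB by (intro ext) simp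
  have evW: "ev W = mk (\<lambda>y. ev (sect W y))" by (rule stab_mk) (simp add: WA)
  define z where "z = (\<lambda>y. ev (invw (sect W y) @ fw y))"
  have zeq: "z y = inv\<^bsub>Sym p\<^esub> (ev (sect W y)) \<otimes>\<^bsub>Sym p\<^esub> ev (fw y)" for y
    unfolding z_def ev_append ev_invw ..
  have zK: "z y \<in> Kset" if y: "y < p" for y
    unfolding z_def
  proof (rule ev_zero_K)
    define s where "s = sect W y"
    have "Aexp (fw y) mod p = Cv y mod p" unfolding fw_def using P_all[OF y] by simp
    moreover have "Aexp s mod p = Cv y mod p"
    proof -
      have "Aexp s mod p = (\<Sum>z<p. epsb (Bwt (sect W z)) (dif y z)) mod p" unfolding s_def by (rule conv[OF y])
      also have "(\<Sum>z<p. epsb (Bwt (sect W z)) (dif y z)) = Cv y" unfolding Cv_def by (intro sum.cong refl) (simp add: WBf)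
      finally show ?thesis .
    qed
    ultimately have "(Aexp (invw s) + Aexp (fw y)) mod p = (Aexp (invw s) + Aexp s) mod p" by (metis mod_add_cong)
    thus "Aexp (invw (sect W y) @ fw y) mod p = 0" using Aexp_invw[of s] unfolding s_def by simp
    fix i assume "i < r"
    have "Bwt (fw y) i = Bwt s i" unfolding fw_def s_def using WB[OF y] by simp
    thus "Bwt (invw (sect W y) @ fw y) i mod p = 0" using Bwt_invw[of s i] unfolding s_def by simp
  qed
  have zGr: "mk z \<in> Gr" by (rule branch[OF zK])
  have "ev W \<otimes>\<^bsub>Sym p\<^esub> mk z = mk (\<lambda>y. ev (sect W y) \<otimes>\<^bsub>Sym p\<^esub> z y)"
    unfolding evW by (rule mk_mult) (simp_all add: z_def)
  also have "\<dots> = Fm" unfolding Fm_def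
    by (rule mk_cong) (simp add: zeq canc2)
  finally have "Fm = ev W \<otimes>\<^bsub>Sym p\<^esub> mk z" by simp
  thus ?thesis using subgroup.m_closed[OF Gr_sub Gg_Gr[OF ev_Gg] zGr] by simp
qed

end

theorem main_loc: assumes g: "g \<in> Gg" and o: "group.ord (Sym p) g = p"
  shows "g \<in> Stab1 p Gg \<or> (\<exists>h\<in>Gr. \<exists>k::nat. g = h \<otimes>\<^bsub>Sym p\<^esub> (a_aut p [^]\<^bsub>Sym p\<^esub> k) \<otimes>\<^bsub>Sym p\<^esub> inv\<^bsub>Sym p\<^esub> h)"
proof -
  obtain w where gw: "g = ev w" using Gg_word[OF g] by blast
  show ?thesis
  proof (cases "Aexp w mod p = 0")
    case True
    have "\<forall>x<p. g [x] = [x]"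
    proof (intro allI impI)
      fix x assume x: "x < p"
      have "(x + Aexp w) mod p = x" using True x by (metis add.right_neutral mod_add_right_eq mod_less)
      thus "g [x] = [x]" using ev_apply[OF x Wd_Nil, of w] ev_Nil gw by simp
    qed
    thus ?thesis unfolding Stab1_def using g by simp
  next
    case False
    obtain j where j: "(Aexp w * j) mod p = 1" using inv_modp[OF False] by blast
    have gc: "g \<in> carrier (Sym p)" using gw by simp
    have "g [^]\<^bsub>Sym p\<^esub> p = \<one>\<^bsub>Sym p\<^esub>" using S.pow_ord_eq_1[OF gc] o by simp
    hence "ev (wpow w p) = \<one>\<^bsub>Sym p\<^esub>" using ev_wpow gw by simp
    hence isidp: "isid (wpow w p)" unfolding isid_def by (simp add: one_apply)
    define h where "h = Fm w j"
    have hGr: "h \<in> Gr" unfolding h_def by (rule F_Gr[OF False isidp j])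
    have hc: "h \<in> carrier (Sym p)" unfolding h_def by (rule Fm_carrier[OF False isidp j])
    have conj: "h \<otimes>\<^bsub>Sym p\<^esub> Af (Aexp w) = g \<otimes>\<^bsub>Sym p\<^esub> h" unfolding h_def gw by (rule F_conj[OF False isidp j])
    have "h \<otimes>\<^bsub>Sym p\<^esub> Af (Aexp w) \<otimes>\<^bsub>Sym p\<^esub> inv\<^bsub>Sym p\<^esub> h = g \<otimes>\<^bsub>Sym p\<^esub> h \<otimes>\<^bsub>Sym p\<^esub> inv\<^bsub>Sym p\<^esub> h"
      unfolding conj ..
    also have "\<dots> = g" using gc hc by (simp add: S.m_assoc)
    finally have "g = h \<otimes>\<^bsub>Sym p\<^esub> (a_aut p [^]\<^bsub>Sym p\<^esub> Aexp w) \<otimes>\<^bsub>Sym p\<^esub> inv\<^bsub>Sym p\<^esub> h"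
      unfolding Af_pow by simp
    thus ?thesis using hGr by blast
  qed
qed

end

theorem mainTheorem12:
  fixes p r :: nat and E :: "nat \<Rightarrow> nat \<Rightarrow> nat" and g :: "nat list \<Rightarrow> nat list"
  assumes "Factorial_Ring.prime p" and "odd p" and "r \<ge> 1"
    and "\<forall>i<r. \<forall>j\<in>{1..p-1}. E i j < p"
    and "rows_lin_indep p r E"
    and "row_space p r E \<noteq> const_space p"
    and "g \<in> multiGGS p r E"
    and "group.ord (Sym p) g = p"
  shows "g \<in> Stab1 p (multiGGS p r E) \<or>
         (\<exists>h \<in> Greg p r E. \<exists>k::nat.
            g = h \<otimes>\<^bsub>Sym p\<^esub> (a_aut p [^]\<^bsub>Sym p\<^esub> k) \<otimes>\<^bsub>Sym p\<^esub> inv\<^bsub>Sym p\<^esub> h)"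
proof -
  interpret mg p r E using assms(1,3,5) by unfold_locales
  show ?thesis by (rule main_loc[OF assms(7,8)])
qed

end
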